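(* Let $\zeta_5=e^{2\pi i/5}$ and write $c_k=\theta[\tfrac15;\tfrac k5]$, $d_k=\theta[\tfrac35;\tfrac k5]$ for $k\in\{1,3,5,7,9\}$ (theta constants, functions of $\tau$). For every $\tau\in\mathbb{H}^2$, $$\theta[1;\tfrac15]=-\zeta_5^2\,\frac{d_1^3c_5+\zeta_5^3d_7^3c_1}{c_3^3},\qquad \theta[1;\tfrac35]=-\zeta_5^3\,\frac{c_7^3d_5-c_9^3d_3}{d_9^3}.$$
   Context: Let $\mathbb{H}^2=\{\tau\in\mathbb{C}:\Im\tau>0\}$. For $(\epsilon,\epsilon')\in\mathbb{R}^2$, $$\theta[\epsilon;\epsilon'](\zeta,\tau)=\sum_{n\in\mathbb{Z}}\exp\Big(2\pi i\Big[\tfrac12\big(n+\tfrac{\epsilon}{2}\big)^2\tau+\big(n+\tfrac{\epsilon}{2}\big)\big(\zeta+\tfrac{\epsilon'}{2}\big)\Big]\Big),$$ and $\theta[\epsilon;\epsilon']=\theta[\epsilon;\epsilon'](0,\tau)$ denotes the theta constant. *)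

theory Defs
  imports "HOL-Analysis.Analysis"
begin

definition theta_char :: "real \<Rightarrow> real \<Rightarrow> complex \<Rightarrow> complex \<Rightarrow> complex" where
  "theta_char e e' z t =
     (\<Sum>\<^sub>\<infinity> n::int. exp (2 * pi * \<i> *
        ((1/2) * (of_int n + of_real e / 2)^2 * t
         + (of_int n + of_real e / 2) * (z + of_real e' / 2))))"

definition theta_const :: "real \<Rightarrow> real \<Rightarrow> complex \<Rightarrow> complex" where
  "theta_const e e' t = theta_char e e' 0 t"

definition zeta5 :: complex where
  "zeta5 = exp (2 * pi * \<i> / 5)"

end

theory Submission
  imports Defs
begin


definition expq :: "complex \<Rightarrow> int \<Rightarrow> int \<Rightarrow> complex" where
  "expq t Q L = exp (2 * pi * \<i> * (of_int Q * t / 200 + of_int L / 100))"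

lemma expq_rel:
  assumes "Q1 = Q2" "L1 = L2 + 50 + 100*m"
  shows "expq t Q1 L1 = - expq t Q2 L2"
proof -
  have "2 * pi * \<i> * (of_int Q1 * t / 200 + of_int L1 / 100) =
        2 * pi * \<i> * (of_int Q2 * t / 200 + of_int L2 / 100) + ((2 * of_int m + 1) * pi) * \<i>"
    using assms by (simp add: field_simps)
  then have "expq t Q1 L1 = expq t Q2 L2 * exp (((2 * of_int m + 1) * pi) * \<i>)"
    unfolding expq_def by (simp add: exp_add)
  also have "exp (((2 * of_int m + 1) * pi) * \<i>) = -1"
    by (rule exp_integer_2pi_plus1) simp
  finally show ?thesis by simp
qed

definition TT :: "complex \<Rightarrow> int \<Rightarrow> int \<Rightarrow> int \<Rightarrow> int \<Rightarrow> int \<Rightarrow> int\<times>int\<times>int\<times>int \<Rightarrow> complex" where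
  "TT t r s l k c = (\<lambda>(a,b,cc,d). expq t ((10*a+r)^2 + (10*b+r)^2 + (10*cc+r)^2 + (10*d+s)^2)
       (l*(10*a+r) + l*(10*b+r) + l*(10*cc+r) + k*(10*d+s) + c))"

definition Ev :: "(int\<times>int\<times>int\<times>int) set" where "Ev = {(a,b,cc,d). even (a+b+cc+d)}"
definition Od :: "(int\<times>int\<times>int\<times>int) set" where "Od = {(a,b,cc,d). odd (a+b+cc+d)}"

lemma pair_rel:
  fixes f g :: "_ \<Rightarrow> complex"
  assumes "\<And>n. n \<in> S \<Longrightarrow> j n \<in> T \<and> i (j n) = n" "\<And>m. m \<in> T \<Longrightarrow> i m \<in> S \<and> j (i m) = m"
    and "\<And>n. n \<in> S \<Longrightarrow> f n = - g (j n)"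
  shows "infsum f S = - infsum g T"
proof -
  have "infsum g T = infsum (\<lambda>n. g (j n)) S"
    by (rule infsum_reindex_bij_witness[of T j i S]) (use assms in auto)
  also have "\<dots> = infsum (\<lambda>n. - f n) S"
    by (rule infsum_cong) (simp add: assms(3))
  also have "\<dots> = - infsum f S" by (rule infsum_uminus)
  finally show ?thesis by simp
qed

definition h_p11 :: "int\<times>int\<times>int\<times>int \<Rightarrow> int\<times>int\<times>int\<times>int" where
  "h_p11 = (\<lambda>(a,b,cc,d). ((0 - a + b + cc + d) div 2, (0 + a + b - cc + d) div 2, (0 + a - b + cc + d) div 2, (0 - a - b - cc + d) div 2))"
definition g_p11 :: "int\<times>int\<times>int\<times>int \<Rightarrow> int\<times>int\<times>int\<times>int" where
  "g_p11 = (\<lambda>(a,b,cc,d). ((0 - a + b + cc - d) div 2, (0 + a + b - cc - d) div 2, (0 + a - b + cc - d) div 2, (0 + a + b + cc + d) div 2))"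
lemma p11: "infsum (TT t 1 5 3 1 0) Ev = - infsum (TT t 3 1 7 1 0) Ev"
proof (rule pair_rel[where j=h_p11 and i=g_p11])
  fix n assume "n \<in> Ev"
  then obtain a b cc d where n: "n = (a,b,cc,d)" "even (a+b+cc+d)" unfolding Ev_def by auto
  define m1 where "m1 = (0 - a + b + cc + d) div 2"
  define m2 where "m2 = (0 + a + b - cc + d) div 2"
  define m3 where "m3 = (0 + a - b + cc + d) div 2"
  define m4 where "m4 = (0 - a - b - cc + d) div 2"
  have e1: "2*m1 = 0 - a + b + cc + d" unfolding m1_def by (rule even_two_times_div_two) (use n(2) in presburger)
  have e2: "2*m2 = 0 + a + b - cc + d" unfolding m2_def by (rule even_two_times_div_two) (use n(2) in presburger)
  have e3: "2*m3 = 0 + a - b + cc + d" unfolding m3_def by (rule even_two_times_div_two) (use n(2) in presburger)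
  have e4: "2*m4 = 0 - a - b - cc + d" unfolding m4_def by (rule even_two_times_div_two) (use n(2) in presburger)
  note e = e1 e2 e3 e4
  have hn: "h_p11 n = (m1,m2,m3,m4)" unfolding h_p11_def n m1_def m2_def m3_def m4_def by simp
  have par: "even (m1+m2+m3+m4)" using e n(2) by presburger
  have iv: "0 - m1 + m2 + m3 - m4 = 2*a" "0 + m1 + m2 - m3 - m4 = 2*b" "0 + m1 - m2 + m3 - m4 = 2*cc" "0 + m1 + m2 + m3 + m4 = 2*d" using e by linarith+
  show "h_p11 n \<in> Ev \<and> g_p11 (h_p11 n) = n" unfolding hn using par iv unfolding Ev_def g_p11_def n by simp
next
  fix n assume "n \<in> Ev"
  then obtain a b cc d where n: "n = (a,b,cc,d)" "even (a+b+cc+d)" unfolding Ev_def by auto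
  define m1 where "m1 = (0 - a + b + cc - d) div 2"
  define m2 where "m2 = (0 + a + b - cc - d) div 2"
  define m3 where "m3 = (0 + a - b + cc - d) div 2"
  define m4 where "m4 = (0 + a + b + cc + d) div 2"
  have e1: "2*m1 = 0 - a + b + cc - d" unfolding m1_def by (rule even_two_times_div_two) (use n(2) in presburger)
  have e2: "2*m2 = 0 + a + b - cc - d" unfolding m2_def by (rule even_two_times_div_two) (use n(2) in presburger)
  have e3: "2*m3 = 0 + a - b + cc - d" unfolding m3_def by (rule even_two_times_div_two) (use n(2) in presburger)
  have e4: "2*m4 = 0 + a + b + cc + d" unfolding m4_def by (rule even_two_times_div_two) (use n(2) in presburger)
  note e = e1 e2 e3 e4
  have hn: "g_p11 n = (m1,m2,m3,m4)" unfolding g_p11_def n m1_def m2_def m3_def m4_def by simp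
  have par: "even (m1+m2+m3+m4)" using e n(2) by presburger
  have iv: "0 - m1 + m2 + m3 + m4 = 2*a" "0 + m1 + m2 - m3 + m4 = 2*b" "0 + m1 - m2 + m3 + m4 = 2*cc" "0 - m1 - m2 - m3 + m4 = 2*d" using e by linarith+
  show "g_p11 n \<in> Ev \<and> h_p11 (g_p11 n) = n" unfolding hn using par iv unfolding Ev_def h_p11_def n by simp
next
  fix n assume "n \<in> Ev"
  then obtain a b cc d where n: "n = (a,b,cc,d)" "even (a+b+cc+d)" unfolding Ev_def by auto
  define m1 where "m1 = (0 - a + b + cc + d) div 2"
  define m2 where "m2 = (0 + a + b - cc + d) div 2"
  define m3 where "m3 = (0 + a - b + cc + d) div 2"
  define m4 where "m4 = (0 - a - b - cc + d) div 2"
  have e1: "2*m1 = 0 - a + b + cc + d" unfolding m1_def by (rule even_two_times_div_two) (use n(2) in presburger)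
  have e2: "2*m2 = 0 + a + b - cc + d" unfolding m2_def by (rule even_two_times_div_two) (use n(2) in presburger)
  have e3: "2*m3 = 0 + a - b + cc + d" unfolding m3_def by (rule even_two_times_div_two) (use n(2) in presburger)
  have e4: "2*m4 = 0 - a - b - cc + d" unfolding m4_def by (rule even_two_times_div_two) (use n(2) in presburger)
  note e = e1 e2 e3 e4
  have hn: "h_p11 n = (m1,m2,m3,m4)" unfolding h_p11_def n m1_def m2_def m3_def m4_def by simp
  have Q: "(10*a+1)^2 + (10*b+1)^2 + (10*cc+1)^2 + (10*d+5)^2 = (10*m1+3)^2 + (10*m2+3)^2 + (10*m3+3)^2 + (10*m4+1)^2"
  proof -
    have "4*((10*m1+3)^2 + (10*m2+3)^2 + (10*m3+3)^2 + (10*m4+1)^2) = (10*(2*m1)+6)^2 + (10*(2*m2)+6)^2 + (10*(2*m3)+6)^2 + (10*(2*m4)+2)^2" by (simp add: power2_eq_square algebra_simps)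
    also have "\<dots> = 4*((10*a+1)^2 + (10*b+1)^2 + (10*cc+1)^2 + (10*d+5)^2)" unfolding e by (simp add: power2_eq_square algebra_simps)
    finally show ?thesis by simp
  qed
  define k where "k = (-2 + (-2)*d) div 2"
  have ek: "2*k = -2 + (-2)*d" unfolding k_def by (rule even_two_times_div_two) (use n(2) in presburger)
  have L: "3*(10*a+1) + 3*(10*b+1) + 3*(10*cc+1) + 1*(10*d+5) + 0 = (7*(10*m1+3) + 7*(10*m2+3) + 7*(10*m3+3) + 1*(10*m4+1) + 0) + 50 + 100*k"
    using e ek by (simp add: algebra_simps)
  show "(TT t 1 5 3 1 0) n = - (TT t 3 1 7 1 0) (h_p11 n)"
    unfolding hn unfolding n TT_def by (simp only: case_prod_conv) (rule expq_rel[OF Q L])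
qed

definition h_p12 :: "int\<times>int\<times>int\<times>int \<Rightarrow> int\<times>int\<times>int\<times>int" where
  "h_p12 = (\<lambda>(a,b,cc,d). ((0 + a - b + cc - d) div 2, (0 + a + b - cc - d) div 2, (0 - a + b + cc - d) div 2, ((-2) - a - b - cc - d) div 2))"
definition g_p12 :: "int\<times>int\<times>int\<times>int \<Rightarrow> int\<times>int\<times>int\<times>int" where
  "g_p12 = (\<lambda>(a,b,cc,d). (((-1) + a + b - cc - d) div 2, ((-1) - a + b + cc - d) div 2, ((-1) + a - b + cc - d) div 2, ((-1) - a - b - cc - d) div 2))"
lemma p12: "infsum (TT t 3 1 1 5 40) Ev = - infsum (TT t 1 5 3 1 0) Od"
proof (rule pair_rel[where j=h_p12 and i=g_p12])
  fix n assume "n \<in> Ev"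
  then obtain a b cc d where n: "n = (a,b,cc,d)" "even (a+b+cc+d)" unfolding Ev_def by auto
  define m1 where "m1 = (0 + a - b + cc - d) div 2"
  define m2 where "m2 = (0 + a + b - cc - d) div 2"
  define m3 where "m3 = (0 - a + b + cc - d) div 2"
  define m4 where "m4 = ((-2) - a - b - cc - d) div 2"
  have e1: "2*m1 = 0 + a - b + cc - d" unfolding m1_def by (rule even_two_times_div_two) (use n(2) in presburger)
  have e2: "2*m2 = 0 + a + b - cc - d" unfolding m2_def by (rule even_two_times_div_two) (use n(2) in presburger)
  have e3: "2*m3 = 0 - a + b + cc - d" unfolding m3_def by (rule even_two_times_div_two) (use n(2) in presburger)
  have e4: "2*m4 = (-2) - a - b - cc - d" unfolding m4_def by (rule even_two_times_div_two) (use n(2) in presburger)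
  note e = e1 e2 e3 e4
  have hn: "h_p12 n = (m1,m2,m3,m4)" unfolding h_p12_def n m1_def m2_def m3_def m4_def by simp
  have par: "odd (m1+m2+m3+m4)" using e n(2) by presburger
  have iv: "(-1) + m1 + m2 - m3 - m4 = 2*a" "(-1) - m1 + m2 + m3 - m4 = 2*b" "(-1) + m1 - m2 + m3 - m4 = 2*cc" "(-1) - m1 - m2 - m3 - m4 = 2*d" using e by linarith+
  show "h_p12 n \<in> Od \<and> g_p12 (h_p12 n) = n" unfolding hn using par iv unfolding Od_def g_p12_def n by simp
next
  fix n assume "n \<in> Od"
  then obtain a b cc d where n: "n = (a,b,cc,d)" "odd (a+b+cc+d)" unfolding Od_def by auto
  define m1 where "m1 = ((-1) + a + b - cc - d) div 2"
  define m2 where "m2 = ((-1) - a + b + cc - d) div 2"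
  define m3 where "m3 = ((-1) + a - b + cc - d) div 2"
  define m4 where "m4 = ((-1) - a - b - cc - d) div 2"
  have e1: "2*m1 = (-1) + a + b - cc - d" unfolding m1_def by (rule even_two_times_div_two) (use n(2) in presburger)
  have e2: "2*m2 = (-1) - a + b + cc - d" unfolding m2_def by (rule even_two_times_div_two) (use n(2) in presburger)
  have e3: "2*m3 = (-1) + a - b + cc - d" unfolding m3_def by (rule even_two_times_div_two) (use n(2) in presburger)
  have e4: "2*m4 = (-1) - a - b - cc - d" unfolding m4_def by (rule even_two_times_div_two) (use n(2) in presburger)
  note e = e1 e2 e3 e4
  have hn: "g_p12 n = (m1,m2,m3,m4)" unfolding g_p12_def n m1_def m2_def m3_def m4_def by simp
  have par: "even (m1+m2+m3+m4)" using e n(2) by presburger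
  have iv: "0 + m1 - m2 + m3 - m4 = 2*a" "0 + m1 + m2 - m3 - m4 = 2*b" "0 - m1 + m2 + m3 - m4 = 2*cc" "(-2) - m1 - m2 - m3 - m4 = 2*d" using e by linarith+
  show "g_p12 n \<in> Ev \<and> h_p12 (g_p12 n) = n" unfolding hn using par iv unfolding Ev_def h_p12_def n by simp
next
  fix n assume "n \<in> Ev"
  then obtain a b cc d where n: "n = (a,b,cc,d)" "even (a+b+cc+d)" unfolding Ev_def by auto
  define m1 where "m1 = (0 + a - b + cc - d) div 2"
  define m2 where "m2 = (0 + a + b - cc - d) div 2"
  define m3 where "m3 = (0 - a + b + cc - d) div 2"
  define m4 where "m4 = ((-2) - a - b - cc - d) div 2"
  have e1: "2*m1 = 0 + a - b + cc - d" unfolding m1_def by (rule even_two_times_div_two) (use n(2) in presburger)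
  have e2: "2*m2 = 0 + a + b - cc - d" unfolding m2_def by (rule even_two_times_div_two) (use n(2) in presburger)
  have e3: "2*m3 = 0 - a + b + cc - d" unfolding m3_def by (rule even_two_times_div_two) (use n(2) in presburger)
  have e4: "2*m4 = (-2) - a - b - cc - d" unfolding m4_def by (rule even_two_times_div_two) (use n(2) in presburger)
  note e = e1 e2 e3 e4
  have hn: "h_p12 n = (m1,m2,m3,m4)" unfolding h_p12_def n m1_def m2_def m3_def m4_def by simp
  have Q: "(10*a+3)^2 + (10*b+3)^2 + (10*cc+3)^2 + (10*d+1)^2 = (10*m1+1)^2 + (10*m2+1)^2 + (10*m3+1)^2 + (10*m4+5)^2"
  proof -
    have "4*((10*m1+1)^2 + (10*m2+1)^2 + (10*m3+1)^2 + (10*m4+5)^2) = (10*(2*m1)+2)^2 + (10*(2*m2)+2)^2 + (10*(2*m3)+2)^2 + (10*(2*m4)+10)^2" by (simp add: power2_eq_square algebra_simps)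
    also have "\<dots> = 4*((10*a+3)^2 + (10*b+3)^2 + (10*cc+3)^2 + (10*d+1)^2)" unfolding e by (simp add: power2_eq_square algebra_simps)
    finally show ?thesis by simp
  qed
  define k where "k = (0 + (2)*d) div 2"
  have ek: "2*k = 0 + (2)*d" unfolding k_def by (rule even_two_times_div_two) (use n(2) in presburger)
  have L: "1*(10*a+3) + 1*(10*b+3) + 1*(10*cc+3) + 5*(10*d+1) + 40 = (3*(10*m1+1) + 3*(10*m2+1) + 3*(10*m3+1) + 1*(10*m4+5) + 0) + 50 + 100*k"
    using e ek by (simp add: algebra_simps)
  show "(TT t 3 1 1 5 40) n = - (TT t 1 5 3 1 0) (h_p12 n)"
    unfolding hn unfolding n TT_def by (simp only: case_prod_conv) (rule expq_rel[OF Q L])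
qed

definition h_p13 :: "int\<times>int\<times>int\<times>int \<Rightarrow> int\<times>int\<times>int\<times>int" where
  "h_p13 = (\<lambda>(a,b,cc,d). (((-1) + a - b - cc - d) div 2, ((-1) - a + b - cc - d) div 2, ((-1) - a - b + cc - d) div 2, ((-1) - a - b - cc + d) div 2))"
definition g_p13 :: "int\<times>int\<times>int\<times>int \<Rightarrow> int\<times>int\<times>int\<times>int" where
  "g_p13 = (\<lambda>(a,b,cc,d). (((-1) + a - b - cc - d) div 2, ((-1) - a + b - cc - d) div 2, ((-1) - a - b + cc - d) div 2, ((-1) - a - b - cc + d) div 2))"
lemma p13: "infsum (TT t 3 1 1 5 40) Od = - infsum (TT t 3 1 7 1 0) Od"
proof (rule pair_rel[where j=h_p13 and i=g_p13])
  fix n assume "n \<in> Od"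
  then obtain a b cc d where n: "n = (a,b,cc,d)" "odd (a+b+cc+d)" unfolding Od_def by auto
  define m1 where "m1 = ((-1) + a - b - cc - d) div 2"
  define m2 where "m2 = ((-1) - a + b - cc - d) div 2"
  define m3 where "m3 = ((-1) - a - b + cc - d) div 2"
  define m4 where "m4 = ((-1) - a - b - cc + d) div 2"
  have e1: "2*m1 = (-1) + a - b - cc - d" unfolding m1_def by (rule even_two_times_div_two) (use n(2) in presburger)
  have e2: "2*m2 = (-1) - a + b - cc - d" unfolding m2_def by (rule even_two_times_div_two) (use n(2) in presburger)
  have e3: "2*m3 = (-1) - a - b + cc - d" unfolding m3_def by (rule even_two_times_div_two) (use n(2) in presburger)
  have e4: "2*m4 = (-1) - a - b - cc + d" unfolding m4_def by (rule even_two_times_div_two) (use n(2) in presburger)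
  note e = e1 e2 e3 e4
  have hn: "h_p13 n = (m1,m2,m3,m4)" unfolding h_p13_def n m1_def m2_def m3_def m4_def by simp
  have par: "odd (m1+m2+m3+m4)" using e n(2) by presburger
  have iv: "(-1) + m1 - m2 - m3 - m4 = 2*a" "(-1) - m1 + m2 - m3 - m4 = 2*b" "(-1) - m1 - m2 + m3 - m4 = 2*cc" "(-1) - m1 - m2 - m3 + m4 = 2*d" using e by linarith+
  show "h_p13 n \<in> Od \<and> g_p13 (h_p13 n) = n" unfolding hn using par iv unfolding Od_def g_p13_def n by simp
next
  fix n assume "n \<in> Od"
  then obtain a b cc d where n: "n = (a,b,cc,d)" "odd (a+b+cc+d)" unfolding Od_def by auto
  define m1 where "m1 = ((-1) + a - b - cc - d) div 2"
  define m2 where "m2 = ((-1) - a + b - cc - d) div 2"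
  define m3 where "m3 = ((-1) - a - b + cc - d) div 2"
  define m4 where "m4 = ((-1) - a - b - cc + d) div 2"
  have e1: "2*m1 = (-1) + a - b - cc - d" unfolding m1_def by (rule even_two_times_div_two) (use n(2) in presburger)
  have e2: "2*m2 = (-1) - a + b - cc - d" unfolding m2_def by (rule even_two_times_div_two) (use n(2) in presburger)
  have e3: "2*m3 = (-1) - a - b + cc - d" unfolding m3_def by (rule even_two_times_div_two) (use n(2) in presburger)
  have e4: "2*m4 = (-1) - a - b - cc + d" unfolding m4_def by (rule even_two_times_div_two) (use n(2) in presburger)
  note e = e1 e2 e3 e4
  have hn: "g_p13 n = (m1,m2,m3,m4)" unfolding g_p13_def n m1_def m2_def m3_def m4_def by simp
  have par: "odd (m1+m2+m3+m4)" using e n(2) by presburger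
  have iv: "(-1) + m1 - m2 - m3 - m4 = 2*a" "(-1) - m1 + m2 - m3 - m4 = 2*b" "(-1) - m1 - m2 + m3 - m4 = 2*cc" "(-1) - m1 - m2 - m3 + m4 = 2*d" using e by linarith+
  show "g_p13 n \<in> Od \<and> h_p13 (g_p13 n) = n" unfolding hn using par iv unfolding Od_def h_p13_def n by simp
next
  fix n assume "n \<in> Od"
  then obtain a b cc d where n: "n = (a,b,cc,d)" "odd (a+b+cc+d)" unfolding Od_def by auto
  define m1 where "m1 = ((-1) + a - b - cc - d) div 2"
  define m2 where "m2 = ((-1) - a + b - cc - d) div 2"
  define m3 where "m3 = ((-1) - a - b + cc - d) div 2"
  define m4 where "m4 = ((-1) - a - b - cc + d) div 2"
  have e1: "2*m1 = (-1) + a - b - cc - d" unfolding m1_def by (rule even_two_times_div_two) (use n(2) in presburger)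
  have e2: "2*m2 = (-1) - a + b - cc - d" unfolding m2_def by (rule even_two_times_div_two) (use n(2) in presburger)
  have e3: "2*m3 = (-1) - a - b + cc - d" unfolding m3_def by (rule even_two_times_div_two) (use n(2) in presburger)
  have e4: "2*m4 = (-1) - a - b - cc + d" unfolding m4_def by (rule even_two_times_div_two) (use n(2) in presburger)
  note e = e1 e2 e3 e4
  have hn: "h_p13 n = (m1,m2,m3,m4)" unfolding h_p13_def n m1_def m2_def m3_def m4_def by simp
  have Q: "(10*a+3)^2 + (10*b+3)^2 + (10*cc+3)^2 + (10*d+1)^2 = (10*m1+3)^2 + (10*m2+3)^2 + (10*m3+3)^2 + (10*m4+1)^2"
  proof -
    have "4*((10*m1+3)^2 + (10*m2+3)^2 + (10*m3+3)^2 + (10*m4+1)^2) = (10*(2*m1)+6)^2 + (10*(2*m2)+6)^2 + (10*(2*m3)+6)^2 + (10*(2*m4)+2)^2" by (simp add: power2_eq_square algebra_simps)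
    also have "\<dots> = 4*((10*a+3)^2 + (10*b+3)^2 + (10*cc+3)^2 + (10*d+1)^2)" unfolding e by (simp add: power2_eq_square algebra_simps)
    finally show ?thesis by simp
  qed
  define k where "k = (1 + (1)*a + (1)*b + (1)*cc + (3)*d) div 2"
  have ek: "2*k = 1 + (1)*a + (1)*b + (1)*cc + (3)*d" unfolding k_def by (rule even_two_times_div_two) (use n(2) in presburger)
  have L: "1*(10*a+3) + 1*(10*b+3) + 1*(10*cc+3) + 5*(10*d+1) + 40 = (7*(10*m1+3) + 7*(10*m2+3) + 7*(10*m3+3) + 1*(10*m4+1) + 0) + 50 + 100*k"
    using e ek by (simp add: algebra_simps)
  show "(TT t 3 1 1 5 40) n = - (TT t 3 1 7 1 0) (h_p13 n)"
    unfolding hn unfolding n TT_def by (simp only: case_prod_conv) (rule expq_rel[OF Q L])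
qed

definition h_p21 :: "int\<times>int\<times>int\<times>int \<Rightarrow> int\<times>int\<times>int\<times>int" where
  "h_p21 = (\<lambda>(a,b,cc,d). ((0 - a - b + cc + d) div 2, (0 - a + b - cc + d) div 2, (0 + a - b - cc + d) div 2, ((-2) - a - b - cc - d) div 2))"
definition g_p21 :: "int\<times>int\<times>int\<times>int \<Rightarrow> int\<times>int\<times>int\<times>int" where
  "g_p21 = (\<lambda>(a,b,cc,d). (((-1) - a - b + cc - d) div 2, ((-1) - a + b - cc - d) div 2, ((-1) + a - b - cc - d) div 2, ((-1) + a + b + cc - d) div 2))"
lemma p21: "infsum (TT t 3 5 9 3 0) Ev = - infsum (TT t 1 3 7 5 60) Od"
proof (rule pair_rel[where j=h_p21 and i=g_p21])
  fix n assume "n \<in> Ev"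
  then obtain a b cc d where n: "n = (a,b,cc,d)" "even (a+b+cc+d)" unfolding Ev_def by auto
  define m1 where "m1 = (0 - a - b + cc + d) div 2"
  define m2 where "m2 = (0 - a + b - cc + d) div 2"
  define m3 where "m3 = (0 + a - b - cc + d) div 2"
  define m4 where "m4 = ((-2) - a - b - cc - d) div 2"
  have e1: "2*m1 = 0 - a - b + cc + d" unfolding m1_def by (rule even_two_times_div_two) (use n(2) in presburger)
  have e2: "2*m2 = 0 - a + b - cc + d" unfolding m2_def by (rule even_two_times_div_two) (use n(2) in presburger)
  have e3: "2*m3 = 0 + a - b - cc + d" unfolding m3_def by (rule even_two_times_div_two) (use n(2) in presburger)
  have e4: "2*m4 = (-2) - a - b - cc - d" unfolding m4_def by (rule even_two_times_div_two) (use n(2) in presburger)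
  note e = e1 e2 e3 e4
  have hn: "h_p21 n = (m1,m2,m3,m4)" unfolding h_p21_def n m1_def m2_def m3_def m4_def by simp
  have par: "odd (m1+m2+m3+m4)" using e n(2) by presburger
  have iv: "(-1) - m1 - m2 + m3 - m4 = 2*a" "(-1) - m1 + m2 - m3 - m4 = 2*b" "(-1) + m1 - m2 - m3 - m4 = 2*cc" "(-1) + m1 + m2 + m3 - m4 = 2*d" using e by linarith+
  show "h_p21 n \<in> Od \<and> g_p21 (h_p21 n) = n" unfolding hn using par iv unfolding Od_def g_p21_def n by simp
next
  fix n assume "n \<in> Od"
  then obtain a b cc d where n: "n = (a,b,cc,d)" "odd (a+b+cc+d)" unfolding Od_def by auto
  define m1 where "m1 = ((-1) - a - b + cc - d) div 2"
  define m2 where "m2 = ((-1) - a + b - cc - d) div 2"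
  define m3 where "m3 = ((-1) + a - b - cc - d) div 2"
  define m4 where "m4 = ((-1) + a + b + cc - d) div 2"
  have e1: "2*m1 = (-1) - a - b + cc - d" unfolding m1_def by (rule even_two_times_div_two) (use n(2) in presburger)
  have e2: "2*m2 = (-1) - a + b - cc - d" unfolding m2_def by (rule even_two_times_div_two) (use n(2) in presburger)
  have e3: "2*m3 = (-1) + a - b - cc - d" unfolding m3_def by (rule even_two_times_div_two) (use n(2) in presburger)
  have e4: "2*m4 = (-1) + a + b + cc - d" unfolding m4_def by (rule even_two_times_div_two) (use n(2) in presburger)
  note e = e1 e2 e3 e4
  have hn: "g_p21 n = (m1,m2,m3,m4)" unfolding g_p21_def n m1_def m2_def m3_def m4_def by simp
  have par: "even (m1+m2+m3+m4)" using e n(2) by presburger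
  have iv: "0 - m1 - m2 + m3 + m4 = 2*a" "0 - m1 + m2 - m3 + m4 = 2*b" "0 + m1 - m2 - m3 + m4 = 2*cc" "(-2) - m1 - m2 - m3 - m4 = 2*d" using e by linarith+
  show "g_p21 n \<in> Ev \<and> h_p21 (g_p21 n) = n" unfolding hn using par iv unfolding Ev_def h_p21_def n by simp
next
  fix n assume "n \<in> Ev"
  then obtain a b cc d where n: "n = (a,b,cc,d)" "even (a+b+cc+d)" unfolding Ev_def by auto
  define m1 where "m1 = (0 - a - b + cc + d) div 2"
  define m2 where "m2 = (0 - a + b - cc + d) div 2"
  define m3 where "m3 = (0 + a - b - cc + d) div 2"
  define m4 where "m4 = ((-2) - a - b - cc - d) div 2"
  have e1: "2*m1 = 0 - a - b + cc + d" unfolding m1_def by (rule even_two_times_div_two) (use n(2) in presburger)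
  have e2: "2*m2 = 0 - a + b - cc + d" unfolding m2_def by (rule even_two_times_div_two) (use n(2) in presburger)
  have e3: "2*m3 = 0 + a - b - cc + d" unfolding m3_def by (rule even_two_times_div_two) (use n(2) in presburger)
  have e4: "2*m4 = (-2) - a - b - cc - d" unfolding m4_def by (rule even_two_times_div_two) (use n(2) in presburger)
  note e = e1 e2 e3 e4
  have hn: "h_p21 n = (m1,m2,m3,m4)" unfolding h_p21_def n m1_def m2_def m3_def m4_def by simp
  have Q: "(10*a+3)^2 + (10*b+3)^2 + (10*cc+3)^2 + (10*d+5)^2 = (10*m1+1)^2 + (10*m2+1)^2 + (10*m3+1)^2 + (10*m4+3)^2"
  proof -
    have "4*((10*m1+1)^2 + (10*m2+1)^2 + (10*m3+1)^2 + (10*m4+3)^2) = (10*(2*m1)+2)^2 + (10*(2*m2)+2)^2 + (10*(2*m3)+2)^2 + (10*(2*m4)+6)^2" by (simp add: power2_eq_square algebra_simps)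
    also have "\<dots> = 4*((10*a+3)^2 + (10*b+3)^2 + (10*cc+3)^2 + (10*d+5)^2)" unfolding e by (simp add: power2_eq_square algebra_simps)
    finally show ?thesis by simp
  qed
  define k where "k = (0 + (3)*a + (3)*b + (3)*cc + (-1)*d) div 2"
  have ek: "2*k = 0 + (3)*a + (3)*b + (3)*cc + (-1)*d" unfolding k_def by (rule even_two_times_div_two) (use n(2) in presburger)
  have L: "9*(10*a+3) + 9*(10*b+3) + 9*(10*cc+3) + 3*(10*d+5) + 0 = (7*(10*m1+1) + 7*(10*m2+1) + 7*(10*m3+1) + 5*(10*m4+3) + 60) + 50 + 100*k"
    using e ek by (simp add: algebra_simps)
  show "(TT t 3 5 9 3 0) n = - (TT t 1 3 7 5 60) (h_p21 n)"
    unfolding hn unfolding n TT_def by (simp only: case_prod_conv) (rule expq_rel[OF Q L])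
qed

definition h_p22 :: "int\<times>int\<times>int\<times>int \<Rightarrow> int\<times>int\<times>int\<times>int" where
  "h_p22 = (\<lambda>(a,b,cc,d). ((0 - a - b + cc + d) div 2, (0 + a - b - cc + d) div 2, (0 - a + b - cc + d) div 2, (0 + a + b + cc + d) div 2))"
definition g_p22 :: "int\<times>int\<times>int\<times>int \<Rightarrow> int\<times>int\<times>int\<times>int" where
  "g_p22 = (\<lambda>(a,b,cc,d). ((0 - a + b - cc + d) div 2, (0 - a - b + cc + d) div 2, (0 + a - b - cc + d) div 2, (0 + a + b + cc + d) div 2))"
lemma p22: "infsum (TT t 1 3 7 5 60) Ev = - infsum (TT t 1 3 9 3 10) Ev"
proof (rule pair_rel[where j=h_p22 and i=g_p22])
  fix n assume "n \<in> Ev"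
  then obtain a b cc d where n: "n = (a,b,cc,d)" "even (a+b+cc+d)" unfolding Ev_def by auto
  define m1 where "m1 = (0 - a - b + cc + d) div 2"
  define m2 where "m2 = (0 + a - b - cc + d) div 2"
  define m3 where "m3 = (0 - a + b - cc + d) div 2"
  define m4 where "m4 = (0 + a + b + cc + d) div 2"
  have e1: "2*m1 = 0 - a - b + cc + d" unfolding m1_def by (rule even_two_times_div_two) (use n(2) in presburger)
  have e2: "2*m2 = 0 + a - b - cc + d" unfolding m2_def by (rule even_two_times_div_two) (use n(2) in presburger)
  have e3: "2*m3 = 0 - a + b - cc + d" unfolding m3_def by (rule even_two_times_div_two) (use n(2) in presburger)
  have e4: "2*m4 = 0 + a + b + cc + d" unfolding m4_def by (rule even_two_times_div_two) (use n(2) in presburger)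
  note e = e1 e2 e3 e4
  have hn: "h_p22 n = (m1,m2,m3,m4)" unfolding h_p22_def n m1_def m2_def m3_def m4_def by simp
  have par: "even (m1+m2+m3+m4)" using e n(2) by presburger
  have iv: "0 - m1 + m2 - m3 + m4 = 2*a" "0 - m1 - m2 + m3 + m4 = 2*b" "0 + m1 - m2 - m3 + m4 = 2*cc" "0 + m1 + m2 + m3 + m4 = 2*d" using e by linarith+
  show "h_p22 n \<in> Ev \<and> g_p22 (h_p22 n) = n" unfolding hn using par iv unfolding Ev_def g_p22_def n by simp
next
  fix n assume "n \<in> Ev"
  then obtain a b cc d where n: "n = (a,b,cc,d)" "even (a+b+cc+d)" unfolding Ev_def by auto
  define m1 where "m1 = (0 - a + b - cc + d) div 2"
  define m2 where "m2 = (0 - a - b + cc + d) div 2"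
  define m3 where "m3 = (0 + a - b - cc + d) div 2"
  define m4 where "m4 = (0 + a + b + cc + d) div 2"
  have e1: "2*m1 = 0 - a + b - cc + d" unfolding m1_def by (rule even_two_times_div_two) (use n(2) in presburger)
  have e2: "2*m2 = 0 - a - b + cc + d" unfolding m2_def by (rule even_two_times_div_two) (use n(2) in presburger)
  have e3: "2*m3 = 0 + a - b - cc + d" unfolding m3_def by (rule even_two_times_div_two) (use n(2) in presburger)
  have e4: "2*m4 = 0 + a + b + cc + d" unfolding m4_def by (rule even_two_times_div_two) (use n(2) in presburger)
  note e = e1 e2 e3 e4
  have hn: "g_p22 n = (m1,m2,m3,m4)" unfolding g_p22_def n m1_def m2_def m3_def m4_def by simp
  have par: "even (m1+m2+m3+m4)" using e n(2) by presburger
  have iv: "0 - m1 - m2 + m3 + m4 = 2*a" "0 + m1 - m2 - m3 + m4 = 2*b" "0 - m1 + m2 - m3 + m4 = 2*cc" "0 + m1 + m2 + m3 + m4 = 2*d" using e by linarith+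
  show "g_p22 n \<in> Ev \<and> h_p22 (g_p22 n) = n" unfolding hn using par iv unfolding Ev_def h_p22_def n by simp
next
  fix n assume "n \<in> Ev"
  then obtain a b cc d where n: "n = (a,b,cc,d)" "even (a+b+cc+d)" unfolding Ev_def by auto
  define m1 where "m1 = (0 - a - b + cc + d) div 2"
  define m2 where "m2 = (0 + a - b - cc + d) div 2"
  define m3 where "m3 = (0 - a + b - cc + d) div 2"
  define m4 where "m4 = (0 + a + b + cc + d) div 2"
  have e1: "2*m1 = 0 - a - b + cc + d" unfolding m1_def by (rule even_two_times_div_two) (use n(2) in presburger)
  have e2: "2*m2 = 0 + a - b - cc + d" unfolding m2_def by (rule even_two_times_div_two) (use n(2) in presburger)
  have e3: "2*m3 = 0 - a + b - cc + d" unfolding m3_def by (rule even_two_times_div_two) (use n(2) in presburger)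
  have e4: "2*m4 = 0 + a + b + cc + d" unfolding m4_def by (rule even_two_times_div_two) (use n(2) in presburger)
  note e = e1 e2 e3 e4
  have hn: "h_p22 n = (m1,m2,m3,m4)" unfolding h_p22_def n m1_def m2_def m3_def m4_def by simp
  have Q: "(10*a+1)^2 + (10*b+1)^2 + (10*cc+1)^2 + (10*d+3)^2 = (10*m1+1)^2 + (10*m2+1)^2 + (10*m3+1)^2 + (10*m4+3)^2"
  proof -
    have "4*((10*m1+1)^2 + (10*m2+1)^2 + (10*m3+1)^2 + (10*m4+3)^2) = (10*(2*m1)+2)^2 + (10*(2*m2)+2)^2 + (10*(2*m3)+2)^2 + (10*(2*m4)+6)^2" by (simp add: power2_eq_square algebra_simps)
    also have "\<dots> = 4*((10*a+1)^2 + (10*b+1)^2 + (10*cc+1)^2 + (10*d+3)^2)" unfolding e by (simp add: power2_eq_square algebra_simps)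
    finally show ?thesis by simp
  qed
  define k where "k = (0 + (2)*a + (2)*b + (2)*cc + (-2)*d) div 2"
  have ek: "2*k = 0 + (2)*a + (2)*b + (2)*cc + (-2)*d" unfolding k_def by (rule even_two_times_div_two) (use n(2) in presburger)
  have L: "7*(10*a+1) + 7*(10*b+1) + 7*(10*cc+1) + 5*(10*d+3) + 60 = (9*(10*m1+1) + 9*(10*m2+1) + 9*(10*m3+1) + 3*(10*m4+3) + 10) + 50 + 100*k"
    using e ek by (simp add: algebra_simps)
  show "(TT t 1 3 7 5 60) n = - (TT t 1 3 9 3 10) (h_p22 n)"
    unfolding hn unfolding n TT_def by (simp only: case_prod_conv) (rule expq_rel[OF Q L])
qed

definition h_p23 :: "int\<times>int\<times>int\<times>int \<Rightarrow> int\<times>int\<times>int\<times>int" where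
  "h_p23 = (\<lambda>(a,b,cc,d). (((-1) + a - b - cc - d) div 2, ((-1) - a + b - cc - d) div 2, ((-1) - a - b + cc - d) div 2, ((-1) - a - b - cc + d) div 2))"
definition g_p23 :: "int\<times>int\<times>int\<times>int \<Rightarrow> int\<times>int\<times>int\<times>int" where
  "g_p23 = (\<lambda>(a,b,cc,d). (((-1) + a - b - cc - d) div 2, ((-1) - a + b - cc - d) div 2, ((-1) - a - b + cc - d) div 2, ((-1) - a - b - cc + d) div 2))"
lemma p23: "infsum (TT t 3 5 9 3 0) Od = - infsum (TT t 1 3 9 3 10) Od"
proof (rule pair_rel[where j=h_p23 and i=g_p23])
  fix n assume "n \<in> Od"
  then obtain a b cc d where n: "n = (a,b,cc,d)" "odd (a+b+cc+d)" unfolding Od_def by auto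
  define m1 where "m1 = ((-1) + a - b - cc - d) div 2"
  define m2 where "m2 = ((-1) - a + b - cc - d) div 2"
  define m3 where "m3 = ((-1) - a - b + cc - d) div 2"
  define m4 where "m4 = ((-1) - a - b - cc + d) div 2"
  have e1: "2*m1 = (-1) + a - b - cc - d" unfolding m1_def by (rule even_two_times_div_two) (use n(2) in presburger)
  have e2: "2*m2 = (-1) - a + b - cc - d" unfolding m2_def by (rule even_two_times_div_two) (use n(2) in presburger)
  have e3: "2*m3 = (-1) - a - b + cc - d" unfolding m3_def by (rule even_two_times_div_two) (use n(2) in presburger)
  have e4: "2*m4 = (-1) - a - b - cc + d" unfolding m4_def by (rule even_two_times_div_two) (use n(2) in presburger)
  note e = e1 e2 e3 e4
  have hn: "h_p23 n = (m1,m2,m3,m4)" unfolding h_p23_def n m1_def m2_def m3_def m4_def by simp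
  have par: "odd (m1+m2+m3+m4)" using e n(2) by presburger
  have iv: "(-1) + m1 - m2 - m3 - m4 = 2*a" "(-1) - m1 + m2 - m3 - m4 = 2*b" "(-1) - m1 - m2 + m3 - m4 = 2*cc" "(-1) - m1 - m2 - m3 + m4 = 2*d" using e by linarith+
  show "h_p23 n \<in> Od \<and> g_p23 (h_p23 n) = n" unfolding hn using par iv unfolding Od_def g_p23_def n by simp
next
  fix n assume "n \<in> Od"
  then obtain a b cc d where n: "n = (a,b,cc,d)" "odd (a+b+cc+d)" unfolding Od_def by auto
  define m1 where "m1 = ((-1) + a - b - cc - d) div 2"
  define m2 where "m2 = ((-1) - a + b - cc - d) div 2"
  define m3 where "m3 = ((-1) - a - b + cc - d) div 2"
  define m4 where "m4 = ((-1) - a - b - cc + d) div 2"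
  have e1: "2*m1 = (-1) + a - b - cc - d" unfolding m1_def by (rule even_two_times_div_two) (use n(2) in presburger)
  have e2: "2*m2 = (-1) - a + b - cc - d" unfolding m2_def by (rule even_two_times_div_two) (use n(2) in presburger)
  have e3: "2*m3 = (-1) - a - b + cc - d" unfolding m3_def by (rule even_two_times_div_two) (use n(2) in presburger)
  have e4: "2*m4 = (-1) - a - b - cc + d" unfolding m4_def by (rule even_two_times_div_two) (use n(2) in presburger)
  note e = e1 e2 e3 e4
  have hn: "g_p23 n = (m1,m2,m3,m4)" unfolding g_p23_def n m1_def m2_def m3_def m4_def by simp
  have par: "odd (m1+m2+m3+m4)" using e n(2) by presburger
  have iv: "(-1) + m1 - m2 - m3 - m4 = 2*a" "(-1) - m1 + m2 - m3 - m4 = 2*b" "(-1) - m1 - m2 + m3 - m4 = 2*cc" "(-1) - m1 - m2 - m3 + m4 = 2*d" using e by linarith+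
  show "g_p23 n \<in> Od \<and> h_p23 (g_p23 n) = n" unfolding hn using par iv unfolding Od_def h_p23_def n by simp
next
  fix n assume "n \<in> Od"
  then obtain a b cc d where n: "n = (a,b,cc,d)" "odd (a+b+cc+d)" unfolding Od_def by auto
  define m1 where "m1 = ((-1) + a - b - cc - d) div 2"
  define m2 where "m2 = ((-1) - a + b - cc - d) div 2"
  define m3 where "m3 = ((-1) - a - b + cc - d) div 2"
  define m4 where "m4 = ((-1) - a - b - cc + d) div 2"
  have e1: "2*m1 = (-1) + a - b - cc - d" unfolding m1_def by (rule even_two_times_div_two) (use n(2) in presburger)
  have e2: "2*m2 = (-1) - a + b - cc - d" unfolding m2_def by (rule even_two_times_div_two) (use n(2) in presburger)
  have e3: "2*m3 = (-1) - a - b + cc - d" unfolding m3_def by (rule even_two_times_div_two) (use n(2) in presburger)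
  have e4: "2*m4 = (-1) - a - b - cc + d" unfolding m4_def by (rule even_two_times_div_two) (use n(2) in presburger)
  note e = e1 e2 e3 e4
  have hn: "h_p23 n = (m1,m2,m3,m4)" unfolding h_p23_def n m1_def m2_def m3_def m4_def by simp
  have Q: "(10*a+3)^2 + (10*b+3)^2 + (10*cc+3)^2 + (10*d+5)^2 = (10*m1+1)^2 + (10*m2+1)^2 + (10*m3+1)^2 + (10*m4+3)^2"
  proof -
    have "4*((10*m1+1)^2 + (10*m2+1)^2 + (10*m3+1)^2 + (10*m4+3)^2) = (10*(2*m1)+2)^2 + (10*(2*m2)+2)^2 + (10*(2*m3)+2)^2 + (10*(2*m4)+6)^2" by (simp add: power2_eq_square algebra_simps)
    also have "\<dots> = 4*((10*a+3)^2 + (10*b+3)^2 + (10*cc+3)^2 + (10*d+5)^2)" unfolding e by (simp add: power2_eq_square algebra_simps)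
    finally show ?thesis by simp
  qed
  define k where "k = (3 + (3)*a + (3)*b + (3)*cc + (3)*d) div 2"
  have ek: "2*k = 3 + (3)*a + (3)*b + (3)*cc + (3)*d" unfolding k_def by (rule even_two_times_div_two) (use n(2) in presburger)
  have L: "9*(10*a+3) + 9*(10*b+3) + 9*(10*cc+3) + 3*(10*d+5) + 0 = (9*(10*m1+1) + 9*(10*m2+1) + 9*(10*m3+1) + 3*(10*m4+3) + 10) + 50 + 100*k"
    using e ek by (simp add: algebra_simps)
  show "(TT t 3 5 9 3 0) n = - (TT t 1 3 9 3 10) (h_p23 n)"
    unfolding hn unfolding n TT_def by (simp only: case_prod_conv) (rule expq_rel[OF Q L])
qed




definition ph :: "complex \<Rightarrow> int \<Rightarrow> int \<Rightarrow> complex" where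
  "ph t a k = exp (2 * pi * \<i> * (of_int (a^2) * t / 200 + of_int (a*k) / 100))"

lemma has_sum_int_split:
  fixes f :: "int \<Rightarrow> 'a::topological_comm_monoid_add"
  assumes "((\<lambda>k. f (int k)) has_sum a) UNIV" "((\<lambda>k. f (- int (Suc k))) has_sum b) UNIV"
  shows "(f has_sum (a + b)) UNIV"
proof -
  have 1: "(f has_sum a) (range int)"
    using assms(1) by (subst has_sum_reindex) (auto simp: o_def inj_on_def)
  have 2: "(f has_sum b) (range (\<lambda>k. - int (Suc k)))"
    using assms(2) by (subst has_sum_reindex) (auto simp: o_def inj_on_def)
  have U: "range int \<union> range (\<lambda>k. - int (Suc k)) = (UNIV :: int set)"
  proof (intro set_eqI iffI)
    fix x :: int
    show "x \<in> range int \<union> range (\<lambda>k. - int (Suc k))"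
    proof (cases "x \<ge> 0")
      case True then have "x = int (nat x)" by simp
      then show ?thesis by blast
    next
      case False then have "x = - int (Suc (nat (- x - 1)))" by simp
      then show ?thesis by blast
    qed
  qed auto
  have D: "range int \<inter> range (\<lambda>k. - int (Suc k)) = {}" by auto
  show ?thesis using has_sum_Un_disjoint[OF 1 2 D] U by simp
qed

lemma summable_on_int_split:
  fixes f :: "int \<Rightarrow> 'a::topological_comm_monoid_add"
  assumes "(\<lambda>k. f (int k)) summable_on UNIV" "(\<lambda>k. f (- int (Suc k))) summable_on UNIV"
  shows "f summable_on UNIV"
  using has_sum_int_split assms unfolding summable_on_def by blast

lemma geo_int_summable:
  fixes \<rho> :: real
  assumes "0 \<le> \<rho>" "\<rho> < 1"
  shows "(\<lambda>n::int. \<rho> ^ nat \<bar>n\<bar>) summable_on UNIV"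
proof (rule summable_on_int_split)
  have s: "summable (\<lambda>k. norm (\<rho> ^ k))" using assms by (simp add: summable_geometric)
  show "(\<lambda>k. \<rho> ^ nat \<bar>int k\<bar>) summable_on UNIV"
    using norm_summable_imp_summable_on[OF s] by simp
  have s2: "summable (\<lambda>k. norm (\<rho> * \<rho> ^ k))" using s by (simp add: summable_mult abs_mult)
  have eq: "(\<lambda>k. \<rho> ^ nat \<bar>- int (Suc k)\<bar>) = (\<lambda>k. \<rho> * \<rho> ^ k)"
    by (rule ext) (simp only: abs_minus_cancel abs_of_nat nat_int power_Suc)
  show "(\<lambda>k. \<rho> ^ nat \<bar>- int (Suc k)\<bar>) summable_on UNIV"
    unfolding eq using norm_summable_imp_summable_on[OF s2] by simp
qed

lemma ph_norm: "norm (ph t a k) = exp (- (pi * real_of_int (a^2) * Im t / 100))"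
  unfolding ph_def by (simp add: norm_exp_eq_Re)

lemma sq_ge_abs: fixes n r :: int assumes "0 \<le> r" "r \<le> 9" shows "\<bar>n\<bar> \<le> (10*n+r)^2"
proof -
  have "\<bar>10*n+r\<bar> \<le> (10*n+r)^2"
  proof (cases "10*n+r = 0")
    case False then have "1 \<le> \<bar>10*n+r\<bar>" by linarith
    then have "\<bar>10*n+r\<bar> * 1 \<le> \<bar>10*n+r\<bar> * \<bar>10*n+r\<bar>" by (intro mult_left_mono) auto
    then show ?thesis by (simp add: power2_eq_square abs_mult[symmetric])
  qed simp
  moreover have "\<bar>n\<bar> \<le> \<bar>10*n+r\<bar>" using assms by linarith
  ultimately show ?thesis by linarith
qed

lemma ph_abs_summable:
  assumes "Im t > 0" "0 \<le> r" "r \<le> 9"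
  shows "(\<lambda>n. norm (ph t (10*n+r) k)) summable_on UNIV"
proof -
  define \<rho> where "\<rho> = exp (- (pi * Im t / 100))"
  have \<rho>: "0 \<le> \<rho>" "\<rho> < 1" unfolding \<rho>_def using assms(1) by auto
  have "(\<lambda>n::int. norm (\<rho> ^ nat \<bar>n\<bar>)) summable_on UNIV"
    using geo_int_summable[OF \<rho>] \<rho>(1) by simp
  then show ?thesis
  proof (rule Infinite_Sum.abs_summable_on_comparison_test)
    fix n :: int
    have "norm (ph t (10*n+r) k) = exp (- (pi * Im t / 100) * real_of_int ((10*n+r)^2))"
      unfolding ph_norm by (simp add: algebra_simps)
    also have "\<dots> \<le> exp (- (pi * Im t / 100) * real_of_int \<bar>n\<bar>)"
    proof -
      have "real_of_int \<bar>n\<bar> \<le> real_of_int ((10*n+r)^2)" using sq_ge_abs[OF assms(2,3), of n] by linarith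
      then show ?thesis using assms(1) by (intro exp_mono mult_left_mono_neg) auto
    qed
    also have "\<dots> = \<rho> ^ nat \<bar>n\<bar>"
      unfolding \<rho>_def by (simp add: exp_of_nat_mult[symmetric] mult.commute)
    finally show "norm (ph t (10*n+r) k) \<le> norm (\<rho> ^ nat \<bar>n\<bar>)" using \<rho> by simp
  qed
qed

lemma prod2:
  fixes f g :: "_ \<Rightarrow> complex"
  assumes f: "(\<lambda>x. norm (f x)) summable_on A" and g: "(\<lambda>x. norm (g x)) summable_on B"
  shows "(\<lambda>p. norm ((\<lambda>(x,y). f x * g y) p)) summable_on A \<times> B"
    and "infsum (\<lambda>(x,y). f x * g y) (A \<times> B) = infsum f A * infsum g B"
proof -
  have in1: "(\<lambda>y. norm ((\<lambda>(x,y). f x * g y) (x, y))) summable_on B" for x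
    using summable_on_cmult_right[OF g, of "norm (f x)"] by (simp add: norm_mult)
  have eq: "infsum (\<lambda>y. norm ((\<lambda>(x,y). f x * g y) (x, y))) B = norm (f x) * infsum (\<lambda>y. norm (g y)) B" for x
    by (simp add: norm_mult infsum_cmult_right[OF g])
  have in2: "(\<lambda>x. norm (infsum (\<lambda>y. norm ((\<lambda>(x,y). f x * g y) (x, y))) B)) summable_on A"
    unfolding eq using summable_on_cmult_left[OF f, of "infsum (\<lambda>y. norm (g y)) B"]
    by (simp add: abs_mult infsum_nonneg)
  show abs: "(\<lambda>p. norm ((\<lambda>(x,y). f x * g y) p)) summable_on A \<times> B"
    using Infinite_Sum.abs_summable_on_Sigma_iff[of "\<lambda>(x,y). f x * g y" A "\<lambda>_. B"] in1 in2 by blast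
  have "infsum (\<lambda>(x,y). f x * g y) (A \<times> B) = infsum (\<lambda>x. infsum (\<lambda>y. (\<lambda>(x,y). f x * g y) (x,y)) B) A"
    by (rule infsum_Sigma_banach[symmetric]) (rule abs_summable_summable[OF abs])
  also have "\<dots> = infsum (\<lambda>x. f x * infsum g B) A"
    using abs_summable_summable[OF g] by (simp add: infsum_cmult_right)
  also have "\<dots> = infsum f A * infsum g B"
    using abs_summable_summable[OF f] by (simp add: infsum_cmult_left)
  finally show "infsum (\<lambda>(x,y). f x * g y) (A \<times> B) = infsum f A * infsum g B" .
qed

lemma theta_eq:
  "theta_const (real_of_int r / 5) (real_of_int k / 5) t = (\<Sum>\<^sub>\<infinity>n::int. ph t (10*n+r) k)"
  unfolding theta_const_def theta_char_def ph_def
proof (rule infsum_cong)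
  fix n :: int
  show "exp (2 * pi * \<i> * ((1/2) * (of_int n + of_real (real_of_int r / 5) / 2)^2 * t
         + (of_int n + of_real (real_of_int r / 5) / 2) * (0 + of_real (real_of_int k / 5) / 2))) =
        exp (2 * pi * \<i> * (of_int ((10*n+r)^2) * t / 200 + of_int ((10*n+r)*k) / 100))"
    by (rule arg_cong[where f=exp]) (simp add: field_simps power2_eq_square)
qed

lemma prod4:
  fixes f1 f2 f3 f4 :: "int \<Rightarrow> complex"
  assumes s1: "(\<lambda>x. norm (f1 x)) summable_on UNIV" and s2: "(\<lambda>x. norm (f2 x)) summable_on UNIV"
    and s3: "(\<lambda>x. norm (f3 x)) summable_on UNIV" and s4: "(\<lambda>x. norm (f4 x)) summable_on UNIV"
  shows "(\<lambda>p. norm ((\<lambda>(a,b,cc,d). f1 a * f2 b * f3 cc * f4 d) p)) summable_on UNIV"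
    and "infsum (\<lambda>(a,b,cc,d). f1 a * f2 b * f3 cc * f4 d) UNIV = infsum f1 UNIV * infsum f2 UNIV * infsum f3 UNIV * infsum f4 UNIV"
proof -
  define g34 where "g34 = (\<lambda>(cc::int,d::int). f3 cc * f4 d)"
  have a34: "(\<lambda>p. norm (g34 p)) summable_on UNIV" and i34: "infsum g34 UNIV = infsum f3 UNIV * infsum f4 UNIV"
    using prod2[OF s3 s4] unfolding g34_def by simp_all
  define g234 where "g234 = (\<lambda>(b::int,q). f2 b * g34 q)"
  have a234: "(\<lambda>p. norm (g234 p)) summable_on UNIV" and i234: "infsum g234 UNIV = infsum f2 UNIV * infsum g34 UNIV"
    using prod2[OF s2 a34] unfolding g234_def by simp_all
  have eq: "(\<lambda>(a,b,cc,d). f1 a * f2 b * f3 cc * f4 d) = (\<lambda>(x,y). f1 x * g234 y)"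
    unfolding g234_def g34_def by (auto simp: fun_eq_iff mult.assoc)
  show "(\<lambda>p. norm ((\<lambda>(a,b,cc,d). f1 a * f2 b * f3 cc * f4 d) p)) summable_on UNIV"
    unfolding eq using prod2(1)[OF s1 a234] by simp
  show "infsum (\<lambda>(a,b,cc,d). f1 a * f2 b * f3 cc * f4 d) UNIV = infsum f1 UNIV * infsum f2 UNIV * infsum f3 UNIV * infsum f4 UNIV"
    unfolding eq using prod2(2)[OF s1 a234] i234 i34 by (simp add: mult.assoc)
qed

lemma TT_prod: "TT t r s l k c = (\<lambda>(a,b,cc,d). exp (2 * pi * \<i> * (of_int c / 100)) *
   (ph t (10*a+r) l * ph t (10*b+r) l * ph t (10*cc+r) l * ph t (10*d+s) k))"
proof (intro ext, clarify)
  fix a b cc d :: int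
  define A where "A = 10*a+r" define B where "B = 10*b+r" define C where "C = 10*cc+r" define D where "D = 10*d+s"
  have "TT t r s l k c (a,b,cc,d) = exp (2 * pi * \<i> * (of_int (A^2+B^2+C^2+D^2) * t / 200 + of_int (l*A+l*B+l*C+k*D+c) / 100))"
    unfolding TT_def expq_def A_def B_def C_def D_def by simp
  also have "\<dots> = exp (2 * pi * \<i> * (of_int c / 100)) *
   (ph t A l * ph t B l * ph t C l * ph t D k)"
    unfolding ph_def exp_add[symmetric] by (rule arg_cong[where f=exp]) (simp add: ring_distribs add_divide_distrib)
  finally show "TT t r s l k c (a,b,cc,d) = exp (2 * pi * \<i> * (of_int c / 100)) *
   (ph t (10*a+r) l * ph t (10*b+r) l * ph t (10*cc+r) l * ph t (10*d+s) k)"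
    unfolding A_def B_def C_def D_def .
qed

lemma TT_sum:
  assumes "Im t > 0" "0 \<le> r" "r \<le> 9" "0 \<le> s" "s \<le> 9"
  shows "(\<lambda>p. norm (TT t r s l k c p)) summable_on UNIV"
    and "infsum (TT t r s l k c) UNIV = exp (2 * pi * \<i> * (of_int c / 100)) *
          (infsum (\<lambda>n. ph t (10*n+r) l) UNIV ^ 3 * infsum (\<lambda>n. ph t (10*n+s) k) UNIV)"
proof -
  note sr = ph_abs_summable[OF assms(1,2,3), of l] and ss = ph_abs_summable[OF assms(1,4,5), of k]
  note P = prod4[OF sr sr sr ss]
  show "(\<lambda>p. norm (TT t r s l k c p)) summable_on UNIV"
  proof -
    have "(\<lambda>p. norm (exp (2 * pi * \<i> * (of_int c / 100))) * norm ((\<lambda>(a,b,cc,d). ph t (10*a+r) l * ph t (10*b+r) l * ph t (10*cc+r) l * ph t (10*d+s) k) p)) summable_on UNIV"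
      by (rule summable_on_cmult_right[OF P(1)])
    moreover have "\<And>p. norm (TT t r s l k c p) = norm (exp (2 * pi * \<i> * (of_int c / 100))) * norm ((\<lambda>(a,b,cc,d). ph t (10*a+r) l * ph t (10*b+r) l * ph t (10*cc+r) l * ph t (10*d+s) k) p)"
      unfolding TT_prod by (simp add: case_prod_unfold norm_mult)
    ultimately show ?thesis by simp
  qed
  have "infsum (TT t r s l k c) UNIV = exp (2 * pi * \<i> * (of_int c / 100)) *
     infsum (\<lambda>(a,b,cc,d). ph t (10*a+r) l * ph t (10*b+r) l * ph t (10*cc+r) l * ph t (10*d+s) k) UNIV"
  proof -
    have sm: "(\<lambda>(a,b,cc,d). ph t (10*a+r) l * ph t (10*b+r) l * ph t (10*cc+r) l * ph t (10*d+s) k) summable_on UNIV"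
      by (rule abs_summable_summable[OF P(1)])
    have "infsum (TT t r s l k c) UNIV = infsum (\<lambda>p. exp (2 * pi * \<i> * (of_int c / 100)) *
       (\<lambda>(a,b,cc,d). ph t (10*a+r) l * ph t (10*b+r) l * ph t (10*cc+r) l * ph t (10*d+s) k) p) UNIV"
      unfolding TT_prod by (rule infsum_cong) (simp add: case_prod_unfold)
    also have "\<dots> = exp (2 * pi * \<i> * (of_int c / 100)) *
     infsum (\<lambda>(a,b,cc,d). ph t (10*a+r) l * ph t (10*b+r) l * ph t (10*cc+r) l * ph t (10*d+s) k) UNIV"
      by (rule infsum_cmult_right) (use sm in simp)
    finally show ?thesis .
  qed
  then show "infsum (TT t r s l k c) UNIV = exp (2 * pi * \<i> * (of_int c / 100)) *
          (infsum (\<lambda>n. ph t (10*n+r) l) UNIV ^ 3 * infsum (\<lambda>n. ph t (10*n+s) k) UNIV)"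
    using P(2) by (simp add: power3_eq_cube)
qed

lemma split_EO:
  fixes f :: "int\<times>int\<times>int\<times>int \<Rightarrow> complex"
  assumes "(\<lambda>p. norm (f p)) summable_on UNIV"
  shows "infsum f UNIV = infsum f Ev + infsum f Od"
proof -
  have s: "f summable_on UNIV" by (rule abs_summable_summable[OF assms])
  have U: "UNIV = Ev \<union> Od" unfolding Ev_def Od_def by auto
  have D: "Ev \<inter> Od = {}" unfolding Ev_def Od_def by auto
  show ?thesis unfolding U
    by (rule infsum_Un_disjoint) (auto intro: summable_on_subset_banach[OF s] simp: D)
qed

lemma ident1:
  assumes "Im t > 0"
  shows "infsum (TT t 1 5 3 1 0) UNIV + infsum (TT t 3 1 1 5 40) UNIV + infsum (TT t 3 1 7 1 0) UNIV = 0"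
proof -
  have s1: "(\<lambda>p. norm (TT t 1 5 3 1 0 p)) summable_on UNIV" by (rule TT_sum(1)) (use assms in auto)
  have s2: "(\<lambda>p. norm (TT t 3 1 1 5 40 p)) summable_on UNIV" by (rule TT_sum(1)) (use assms in auto)
  have s3: "(\<lambda>p. norm (TT t 3 1 7 1 0 p)) summable_on UNIV" by (rule TT_sum(1)) (use assms in auto)
  show ?thesis unfolding split_EO[OF s1] split_EO[OF s2] split_EO[OF s3] p11 p12 p13 by simp
qed

lemma ident2:
  assumes "Im t > 0"
  shows "infsum (TT t 3 5 9 3 0) UNIV + infsum (TT t 1 3 7 5 60) UNIV + infsum (TT t 1 3 9 3 10) UNIV = 0"
proof -
  have s1: "(\<lambda>p. norm (TT t 3 5 9 3 0 p)) summable_on UNIV" by (rule TT_sum(1)) (use assms in auto)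
  have s2: "(\<lambda>p. norm (TT t 1 3 7 5 60 p)) summable_on UNIV" by (rule TT_sum(1)) (use assms in auto)
  have s3: "(\<lambda>p. norm (TT t 1 3 9 3 10 p)) summable_on UNIV" by (rule TT_sum(1)) (use assms in auto)
  show ?thesis unfolding split_EO[OF s1] split_EO[OF s2] split_EO[OF s3] p21 p22 p23 by simp
qed




fun gb :: "complex \<Rightarrow> nat \<Rightarrow> nat \<Rightarrow> complex" where
  "gb p 0 j = (if j = 0 then 1 else 0)"
| "gb p (Suc M) j = (if j = 0 then 1 else gb p M j + p^(M+1-j) * gb p M (j-1))"

lemma gb_0 [simp]: "gb p M 0 = 1"
  by (cases M) auto

lemma gb_zero: "M < j \<Longrightarrow> gb p M j = 0"
  by (induction M arbitrary: j) auto

lemma qbin: "(\<Prod>k<M. 1 + y * Q^(2*k)) = (\<Sum>j\<le>M. gb (Q^2) M j * Q^(j*(j-1)) * y^j)"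
proof (induction M)
  case 0 then show ?case by simp
next
  case (Suc M)
  define F where "F j = gb (Q^2) M j * Q^(j*(j-1)) * y^j" for j
  have A: "(\<Sum>j\<le>Suc M. gb (Q^2) M j * Q^(j*(j-1)) * y^j) = (\<Sum>j\<le>M. F j)"
    using gb_zero[of M "Suc M"] by (simp add: F_def)
  have B: "(\<Sum>j\<le>Suc M. (if j = 0 then 0 else (Q^2)^(M+1-j) * gb (Q^2) M (j-1)) * Q^(j*(j-1)) * y^j)
        = (\<Sum>i\<le>M. F i * (y * Q^(2*M)))"
  proof -
    have "(\<Sum>j\<le>Suc M. (if j = 0 then 0 else (Q^2)^(M+1-j) * gb (Q^2) M (j-1)) * Q^(j*(j-1)) * y^j)
          = (\<Sum>i\<le>M. (Q^2)^(M-i) * gb (Q^2) M i * Q^((Suc i)*i) * y^(Suc i))"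
      by (subst sum.atMost_Suc_shift) simp
    also have "\<dots> = (\<Sum>i\<le>M. F i * (y * Q^(2*M)))"
    proof (rule sum.cong)
      fix i assume "i \<in> {..M}"
      then have i: "i \<le> M" by simp
      have e: "2*(M-i) + Suc i * i = i*(i-1) + 2*M"
        using i by (cases i) (auto simp: algebra_simps)
      have "(Q^2)^(M-i) * Q^((Suc i)*i) = Q^(i*(i-1)) * Q^(2*M)"
        by (simp only: power_mult[symmetric] power_add[symmetric] e)
      then show "(Q^2)^(M-i) * gb (Q^2) M i * Q^((Suc i)*i) * y^(Suc i) = F i * (y * Q^(2*M))"
        unfolding F_def by (simp add: algebra_simps)
    qed simp
    finally show ?thesis .
  qed
  have "(\<Sum>j\<le>Suc M. gb (Q^2) (Suc M) j * Q^(j*(j-1)) * y^j) =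
        (\<Sum>j\<le>Suc M. gb (Q^2) M j * Q^(j*(j-1)) * y^j +
           (if j = 0 then 0 else (Q^2)^(M+1-j) * gb (Q^2) M (j-1)) * Q^(j*(j-1)) * y^j)"
    by (rule sum.cong) (auto simp: algebra_simps)
  also have "\<dots> = (\<Sum>j\<le>M. F j) + (\<Sum>i\<le>M. F i * (y * Q^(2*M)))"
    unfolding sum.distrib A B ..
  also have "\<dots> = (\<Sum>j\<le>M. F j) * (1 + y * Q^(2*M))"
    unfolding sum_distrib_right[symmetric] by (simp add: algebra_simps)
  also have "(\<Sum>j\<le>M. F j) = (\<Prod>k<M. 1 + y * Q^(2*k))"
    using Suc.IH by (simp add: F_def)
  finally show ?case by simp
qed

definition Dp :: "complex \<Rightarrow> nat \<Rightarrow> complex" where "Dp p j = (\<Prod>l<j. 1 - p^(l+1))"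
definition Np :: "complex \<Rightarrow> nat \<Rightarrow> nat \<Rightarrow> complex" where "Np p M j = (\<Prod>l<j. 1 - p^(M-l))"

lemma gb_closed: "j \<le> M \<Longrightarrow> gb p M j * Dp p j = Np p M j"
proof (induction M arbitrary: j)
  case 0 then show ?case by (simp add: Dp_def Np_def)
next
  case (Suc M)
  show ?case
  proof (cases j)
    case 0 then show ?thesis by (simp add: Dp_def Np_def)
  next
    case (Suc i)
    with Suc.prems have i: "i \<le> M" by simp
    have DS: "Dp p (Suc i) = Dp p i * (1 - p^(i+1))" by (simp add: Dp_def)
    have NS: "Np p (Suc M) (Suc i) = (1 - p^(M+1)) * Np p M i"
      unfolding Np_def prod.lessThan_Suc_shift by simp
    have t1: "gb p M (Suc i) * Dp p (Suc i) = Np p M i * (1 - p^(M-i))"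
    proof (cases "i < M")
      case True
      then have "gb p M (Suc i) * Dp p (Suc i) = Np p M (Suc i)" by (intro Suc.IH) simp
      then show ?thesis by (simp add: Np_def)
    next
      case False then have "i = M" using i by simp
      then show ?thesis by (simp add: gb_zero)
    qed
    have t2: "gb p M i * Dp p (Suc i) = Np p M i * (1 - p^(i+1))"
      using Suc.IH[OF i] DS by simp
    have pe: "p^(M-i) * p^(i+1) = p^(M+1)"
      using i by (simp add: power_add[symmetric])
    have "gb p (Suc M) j * Dp p j = gb p M (Suc i) * Dp p (Suc i) + p^(M-i) * (gb p M i * Dp p (Suc i))"
      using Suc by (simp add: algebra_simps)
    also have "\<dots> = Np p M i * ((1 - p^(M-i)) + p^(M-i) - p^(M-i) * p^(i+1))"
      unfolding t1 t2 by (simp add: algebra_simps)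
    also have "\<dots> = Np p (Suc M) j"
      unfolding pe NS Suc by simp
    finally show ?thesis .
  qed
qed


lemma prod_split: "(\<Prod>k<N+K. f k) = (\<Prod>k<N. f k) * (\<Prod>i<K. f (N+i))" for N K :: nat
  and f :: "nat \<Rightarrow> 'a::comm_monoid_mult"
  by (induction K) (simp_all add: ac_simps)
lemma sum_split: "(\<Sum>k<N+K. f k) = (\<Sum>k<N. f k) + (\<Sum>i<K. f (N+i))" for N K :: nat
  and f :: "nat \<Rightarrow> 'a::comm_monoid_add"
  by (induction K) (simp_all add: ac_simps)
lemma sum_odd: "(\<Sum>i<N. 2*i+1) = N*(N::nat)"
  by (induction N) (simp_all add: algebra_simps)

lemma finite_id:
  fixes Q x :: complex
  assumes Q: "Q \<noteq> 0" and x: "x \<noteq> 0"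
  shows "(\<Prod>i<N. (1 + x*Q^(2*i+1)) * (1 + Q^(2*i+1)/x)) =
        (\<Sum>m\<le>N. gb (Q^2) (2*N) (N+m) * Q^(m*m) * x^m) +
        (\<Sum>m<N. gb (Q^2) (2*N) (N - Suc m) * Q^((m+1)*(m+1)) * (1/x)^(m+1))"
proof (cases "N = 0")
  case True then show ?thesis by simp
next
  case False
  then have N1: "N \<ge> 1" by simp
  define y where "y = x / Q^(2*N-1)"
  define f where "f k = 1 + y * Q^(2*k)" for k
  define g where "g j = gb (Q^2) (2*N) j * Q^(j*(j-1)) * y^j" for j
  define c where "c = x^N / Q^(N*N)"
  have c0: "c \<noteq> 0" unfolding c_def using Q x by simp
  have q: "(\<Prod>k<2*N. f k) = (\<Sum>j\<le>2*N. g j)"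
    unfolding f_def g_def by (rule qbin)
  have f1: "f (N+i) = 1 + x*Q^(2*i+1)" for i
  proof -
    have "Q^(2*(N+i)) = Q^(2*N-1) * Q^(2*i+1)"
      unfolding power_add[symmetric] using N1 by (simp add: algebra_simps)
    then show ?thesis unfolding f_def y_def using Q by simp
  qed
  have f2: "f (N - Suc i) = (x / Q^(2*i+1)) * (1 + Q^(2*i+1)/x)" if "i < N" for i
  proof -
    have e: "2*(N - Suc i) + (2*i+1) = 2*N-1" using that by arith
    have "Q^(2*N-1) = Q^(2*(N - Suc i)) * Q^(2*i+1)"
      by (simp only: power_add[symmetric] e)
    then have "y * Q^(2*(N - Suc i)) = x / Q^(2*i+1)"
      unfolding y_def using Q by (simp add: field_simps)
    then show ?thesis unfolding f_def using x Q by (simp add: field_simps)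
  qed
  have pQ: "(\<Prod>i<N. Q^(2*i+1)) = Q^(N*N)"
    by (simp only: power_sum[symmetric] sum_odd)
  have L: "(\<Prod>k<2*N. f k) = c * (\<Prod>i<N. (1 + x*Q^(2*i+1)) * (1 + Q^(2*i+1)/x))"
  proof -
    have "(\<Prod>k<2*N. f k) = (\<Prod>k<N. f k) * (\<Prod>i<N. f (N+i))"
      using prod_split[of f N N] by (simp add: mult_2)
    also have "(\<Prod>k<N. f k) = (\<Prod>i<N. f (N - Suc i))"
      by (rule prod.nat_diff_reindex[symmetric])
    also have "\<dots> = (\<Prod>i<N. (x / Q^(2*i+1)) * (1 + Q^(2*i+1)/x))"
      by (rule prod.cong) (simp_all add: f2)
    also have "\<dots> = (\<Prod>i<N. x / Q^(2*i+1)) * (\<Prod>i<N. 1 + Q^(2*i+1)/x)"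
      by (rule prod.distrib)
    also have "(\<Prod>i<N. x / Q^(2*i+1)) = c"
      unfolding c_def prod_dividef pQ by simp
    also have "(\<Prod>i<N. f (N+i)) = (\<Prod>i<N. 1 + x*Q^(2*i+1))"
      by (simp add: f1)
    also have "c * (\<Prod>i<N. 1 + Q^(2*i+1)/x) * (\<Prod>i<N. 1 + x*Q^(2*i+1)) =
       c * (\<Prod>i<N. (1 + x*Q^(2*i+1)) * (1 + Q^(2*i+1)/x))"
      by (simp only: prod.distrib ac_simps)
    finally show ?thesis .
  qed
  have g1: "g (N+m) = c * (gb (Q^2) (2*N) (N+m) * Q^(m*m) * x^m)" for m
  proof -
    have ex: "(N+m)*(N+m-1) + N*N = m*m + (2*N-1)*(N+m)"
      using N1 by (cases N) (auto simp: algebra_simps)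
    have A: "Q^((N+m)*(N+m-1)) = Q^(m*m) * (Q^(2*N-1))^(N+m) / Q^(N*N)"
    proof -
      have "Q^((N+m)*(N+m-1)) * Q^(N*N) = Q^(m*m) * (Q^(2*N-1))^(N+m)"
        by (simp only: power_add[symmetric] power_mult[symmetric] ex)
      then show ?thesis using Q by (simp add: field_simps)
    qed
    show ?thesis unfolding g_def c_def y_def A using Q
      by (simp add: field_simps power_divide power_add)
  qed
  have g2: "g (N - Suc m) = c * (gb (Q^2) (2*N) (N - Suc m) * Q^((m+1)*(m+1)) * (1/x)^(m+1))" if "m < N" for m
  proof -
    obtain R where R: "N = Suc (m + R)" using \<open>m < N\<close> by (metis add_Suc_right less_iff_Suc_add)
    then have j: "N - Suc m = R" by simp
    have ex: "R*(R-1) + N*N = (m+1)*(m+1) + (2*N-1)*R"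
      unfolding R by (cases R) (auto simp: algebra_simps)
    have A: "Q^(R*(R-1)) = Q^((m+1)*(m+1)) * (Q^(2*N-1))^R / Q^(N*N)"
    proof -
      have "Q^(R*(R-1)) * Q^(N*N) = Q^((m+1)*(m+1)) * (Q^(2*N-1))^R"
        by (simp only: power_add[symmetric] power_mult[symmetric] ex)
      then show ?thesis using Q by (simp add: field_simps)
    qed
    have X: "x^R = x^N / x^(m+1)"
      using x unfolding R by (simp add: field_simps power_add)
    have xN: "x * (x^R * x^m) = x^N" unfolding R by (simp add: power_add algebra_simps)
    show ?thesis unfolding g_def c_def y_def j A X using Q x
      by (simp add: field_simps power_divide power_add xN)
  qed
  have Rr: "(\<Sum>j\<le>2*N. g j) = c * ((\<Sum>m\<le>N. gb (Q^2) (2*N) (N+m) * Q^(m*m) * x^m) +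
        (\<Sum>m<N. gb (Q^2) (2*N) (N - Suc m) * Q^((m+1)*(m+1)) * (1/x)^(m+1)))"
  proof -
    have "(\<Sum>j\<le>2*N. g j) = (\<Sum>j<N + Suc N. g j)"
      by (simp add: lessThan_Suc_atMost[symmetric] mult_2)
    also have "\<dots> = (\<Sum>j<N. g j) + (\<Sum>m<Suc N. g (N+m))" by (rule sum_split)
    also have "(\<Sum>j<N. g j) = (\<Sum>m<N. g (N - Suc m))" by (rule sum.nat_diff_reindex[symmetric])
    also have "\<dots> = (\<Sum>m<N. c * (gb (Q^2) (2*N) (N - Suc m) * Q^((m+1)*(m+1)) * (1/x)^(m+1)))"
      by (rule sum.cong) (simp_all add: g2)
    also have "(\<Sum>m<Suc N. g (N+m)) = (\<Sum>m\<le>N. c * (gb (Q^2) (2*N) (N+m) * Q^(m*m) * x^m))"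
      unfolding lessThan_Suc_atMost g1 ..
    finally show ?thesis by (simp add: sum_distrib_left algebra_simps)
  qed
  show ?thesis using q L Rr c0 by simp
qed


lemma geo_partial: fixes r :: real assumes "0 \<le> r" "r < 1" shows "(\<Sum>i<j. r^i) \<le> 1/(1-r)"
proof -
  have "(\<Sum>i<j. r^i) = (1 - r^j)/(1-r)" using assms by (simp add: sum_gp_strict)
  also have "\<dots> \<le> 1/(1-r)" using assms by (intro divide_right_mono) auto
  finally show ?thesis .
qed

lemma Np_near1:
  assumes r: "norm p < 1" and j: "j \<le> M"
  shows "norm (Np p M j - 1) \<le> exp (norm p ^ (M - j + 1) / (1 - norm p)) - 1"
proof -
  define r where "r = norm p"
  have r0: "0 \<le> r" "r < 1" using r unfolding r_def by auto
  have "Np p M j = (\<Prod>l<j. 1 + (- (p^(M-l))))" by (simp add: Np_def)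
  then have "norm (Np p M j - 1) \<le> (\<Prod>l<j. 1 + norm (- (p^(M-l)))) - 1"
    using norm_prod_minus1_le_prod_minus1[of "\<lambda>l. - (p^(M-l))" "{..<j}"] by simp
  also have "(\<Prod>l<j. 1 + norm (- (p^(M-l)))) = (\<Prod>l<j. 1 + r^(M-l))"
    by (simp add: r_def norm_power)
  also have "\<dots> \<le> (\<Prod>l<j. exp (r^(M-l)))"
    by (intro prod_mono) (use r0 in auto)
  also have "\<dots> = exp (\<Sum>l<j. r^(M-l))" by (simp add: exp_sum)
  also have "(\<Sum>l<j. r^(M-l)) = r^(M-j+1) * (\<Sum>l<j. r^(j - Suc l))"
    unfolding sum_distrib_left
  proof (rule sum.cong)
    fix l assume "l \<in> {..<j}"
    then have e: "M - l = (M - j + 1) + (j - Suc l)" using j by simp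
    show "r^(M-l) = r^(M-j+1) * r^(j - Suc l)" by (subst e) (rule power_add)
  qed simp
  also have "(\<Sum>l<j. r^(j - Suc l)) = (\<Sum>i<j. r^i)" by (rule sum.nat_diff_reindex)
  also have "r^(M-j+1) * (\<Sum>i<j. r^i) \<le> r^(M-j+1) * (1/(1-r))"
    using r0 by (intro mult_left_mono geo_partial) auto
  finally show ?thesis unfolding r_def using r0 by (simp add: divide_simps)
qed

lemma one_minus_ge_exp:
  fixes u r :: real assumes "0 \<le> u" "u \<le> r" "r < 1"
  shows "exp (- (u/(1-r))) \<le> 1 - u"
proof -
  have u1: "u < 1" using assms by simp
  have "1 + u/(1-u) \<le> exp (u/(1-u))" by (rule exp_ge_add_one_self)
  also have "1 + u/(1-u) = 1/(1-u)" using u1 by (simp add: field_simps)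
  finally have a: "1/(1-u) \<le> exp (u/(1-u))" .
  have b: "u/(1-u) \<le> u/(1-r)" using assms by (intro divide_left_mono) auto
  have "exp (- (u/(1-r))) \<le> exp (- (u/(1-u)))" using b by simp
  also have "\<dots> = 1 / exp (u/(1-u))" by (simp add: exp_minus field_simps)
  also have "\<dots> \<le> 1 / (1/(1-u))" using a u1 by (intro divide_left_mono) auto
  also have "\<dots> = 1 - u" by simp
  finally show ?thesis .
qed


lemma Dp_lower:
  assumes r: "norm p < 1"
  shows "exp (- (norm p / (1 - norm p)^2)) \<le> norm (Dp p j)"
proof -
  define r where "r = norm p"
  have r0: "0 \<le> r" "r < 1" using r unfolding r_def by auto
  have "exp (- (r / (1 - r)^2)) \<le> exp (- ((\<Sum>l<j. r^(l+1)) / (1-r)))"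
  proof -
    have "(\<Sum>l<j. r^(l+1)) = r * (\<Sum>l<j. r^l)" by (simp add: sum_distrib_left)
    also have "\<dots> \<le> r * (1/(1-r))" using r0 by (intro mult_left_mono geo_partial) auto
    finally have "(\<Sum>l<j. r^(l+1)) / (1-r) \<le> r * (1/(1-r)) / (1-r)" using r0 by (intro divide_right_mono) auto
    also have "\<dots> = r / (1-r)^2" by (simp add: power2_eq_square)
    finally show ?thesis by simp
  qed
  also have "\<dots> = (\<Prod>l<j. exp (- (r^(l+1) / (1-r))))"
  proof -
    have "- ((\<Sum>l<j. r^(l+1)) / (1-r)) = (\<Sum>l<j. - (r^(l+1) / (1-r)))"
      by (simp add: sum_negf sum_divide_distrib)
    then show ?thesis by (simp only: exp_sum finite_lessThan)
  qed
  also have "\<dots> \<le> (\<Prod>l<j. norm (1 - p^(l+1)))"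
  proof (rule prod_mono, intro conjI)
    fix l
    have "exp (- (r^(l+1) / (1-r))) \<le> 1 - r^(l+1)"
    proof (rule one_minus_ge_exp)
      show "0 \<le> r^(l+1)" using r0 by simp
      have "r^(l+1) \<le> r^1" by (rule power_decreasing) (use r0 in auto)
      then show "r^(l+1) \<le> r" by simp
    qed (use r0 in auto)
    also have "\<dots> \<le> norm (1 - p^(l+1))"
      using norm_triangle_ineq2[of 1 "p^(l+1)"] by (simp add: r_def norm_power norm_mult)
    finally show "exp (- (r^(l+1) / (1-r))) \<le> norm (1 - p^(l+1))" .
  qed simp
  also have "\<dots> = norm (Dp p j)" by (simp add: Dp_def prod_norm)
  finally show ?thesis unfolding r_def .
qed

definition Bd :: "real \<Rightarrow> real" where "Bd r = exp (r/(1-r)) * exp (r/(1-r)^2)"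

lemma gb_bound:
  assumes r: "norm p < 1"
  shows "norm (gb p M j) \<le> Bd (norm p)"
proof (cases "j \<le> M")
  case False then show ?thesis by (simp add: gb_zero Bd_def)
next
  case True
  define r where "r = norm p"
  have r0: "0 \<le> r" "r < 1" using r unfolding r_def by auto
  have D: "exp (- (r / (1 - r)^2)) \<le> norm (Dp p j)" using Dp_lower[OF r] unfolding r_def .
  have Dpos: "0 < norm (Dp p j)" using D by (meson exp_gt_zero less_le_trans)
  have N: "norm (Np p M j) \<le> exp (r/(1-r))"
  proof -
    have "norm (Np p M j) \<le> 1 + norm (Np p M j - 1)"
      using norm_triangle_ineq[of 1 "Np p M j - 1"] by simp
    also have "\<dots> \<le> exp (r ^ (M - j + 1) / (1 - r))" using Np_near1[OF r True] unfolding r_def by simp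
    also have "\<dots> \<le> exp (r/(1-r))"
    proof -
      have "r ^ (M - j + 1) \<le> r ^ 1" by (rule power_decreasing) (use r0 in auto)
      then show ?thesis using r0 by (simp add: divide_right_mono)
    qed
    finally show ?thesis .
  qed
  have "gb p M j = Np p M j / Dp p j" using gb_closed[OF True, of p] Dpos by (simp add: field_simps)
  then have "norm (gb p M j) = norm (Np p M j) / norm (Dp p j)" by (simp add: norm_divide)
  also have "\<dots> \<le> exp (r/(1-r)) / exp (- (r / (1 - r)^2))"
    by (rule frac_le) (use N D Dpos in auto)
  also have "\<dots> = Bd r" by (simp add: Bd_def exp_minus field_simps)
  finally show ?thesis unfolding r_def .
qed



lemma Eprod:
  assumes r: "norm p < 1"
  shows "convergent_prod (\<lambda>l. 1 - p^(l+1))" and "prodinf (\<lambda>l. 1 - p^(l+1)) \<noteq> 0"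
    and "(\<lambda>j. Dp p j) \<longlonglongrightarrow> prodinf (\<lambda>l. 1 - p^(l+1))"
proof -
  have "summable (\<lambda>l. norm p * norm p ^ l)"
    using r by (intro summable_mult summable_geometric) simp
  then have "summable (\<lambda>l. norm ((1 - p^(l+1)) - 1))" by (simp add: norm_power norm_mult)
  then have "abs_convergent_prod (\<lambda>l. 1 - p^(l+1))" by (rule summable_imp_abs_convergent_prod)
  then show cp: "convergent_prod (\<lambda>l. 1 - p^(l+1))" by (rule abs_convergent_prod_imp_convergent_prod)
  have nz: "1 - p^(l+1) \<noteq> 0" for l
  proof
    assume "1 - p^(l+1) = 0"
    then have "p^(l+1) = 1" by simp
    then have "norm (p^(l+1)) = 1" by simp
    moreover have "norm (p^(l+1)) < 1"
    proof -
      have "norm p ^ (l+1) \<le> norm p ^ 1" by (rule power_decreasing) (use r in auto)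
      then show ?thesis using r by (simp add: norm_power norm_mult)
    qed
    ultimately show False by simp
  qed
  show "prodinf (\<lambda>l. 1 - p^(l+1)) \<noteq> 0" by (rule prodinf_nonzero[OF cp nz])
  have "(\<lambda>n. prod (\<lambda>l. 1 - p^(l+1)) {..n}) \<longlonglongrightarrow> prodinf (\<lambda>l. 1 - p^(l+1))"
    using convergent_prod_LIMSEQ[OF cp] by simp
  then show "(\<lambda>j. Dp p j) \<longlonglongrightarrow> prodinf (\<lambda>l. 1 - p^(l+1))"
    unfolding Dp_def using LIMSEQ_lessThan_iff_atMost[where f="prod (\<lambda>l. 1 - p^(l+1))"] by simp
qed

lemma gb_lim:
  assumes r: "norm p < 1" and J: "filterlim J at_top F"
    and JM: "filterlim (\<lambda>n. M n - J n) at_top F" and le: "eventually (\<lambda>n. J n \<le> M n) F"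
  shows "((\<lambda>n. gb p (M n) (J n)) \<longlongrightarrow> 1 / prodinf (\<lambda>l. 1 - p^(l+1))) F"
proof -
  define E where "E = prodinf (\<lambda>l. 1 - p^(l+1))"
  have E0: "E \<noteq> 0" unfolding E_def by (rule Eprod(2)[OF r])
  have D: "((\<lambda>n. Dp p (J n)) \<longlongrightarrow> E) F"
    unfolding E_def by (rule filterlim_compose[OF Eprod(3)[OF r] J])
  define rr where "rr = norm p"
  have r0: "0 \<le> rr" "rr < 1" using r unfolding rr_def by auto
  have pw: "((\<lambda>n. rr ^ (M n - J n + 1)) \<longlongrightarrow> 0) F"
  proof -
    have "filterlim (\<lambda>n. M n - J n + 1) at_top F"
      by (rule filterlim_compose[OF filterlim_add_const_nat_at_top JM])
    moreover have "(\<lambda>k. rr ^ k) \<longlonglongrightarrow> 0" using r0 by (intro LIMSEQ_power_zero) simp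
    ultimately show ?thesis by (rule filterlim_compose[rotated])
  qed
  have g0: "((\<lambda>n. exp (rr ^ (M n - J n + 1) / (1 - rr)) - 1) \<longlongrightarrow> 0) F"
  proof -
    have "((\<lambda>n. exp (rr ^ (M n - J n + 1) / (1 - rr)) - 1) \<longlongrightarrow> exp (0 / (1 - rr)) - 1) F"
      by (intro tendsto_intros pw) (use r0 in simp)
    then show ?thesis by simp
  qed
  have "((\<lambda>n. Np p (M n) (J n) - 1) \<longlongrightarrow> 0) F"
  proof (rule Lim_null_comparison[OF _ g0])
    show "\<forall>\<^sub>F n in F. norm (Np p (M n) (J n) - 1) \<le> exp (rr ^ (M n - J n + 1) / (1 - rr)) - 1"
      using le by eventually_elim (use Np_near1[OF r] in \<open>simp add: rr_def\<close>)
  qed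
  then have N: "((\<lambda>n. Np p (M n) (J n)) \<longlongrightarrow> 1) F" by (simp add: LIM_zero_iff)
  have T: "((\<lambda>n. Np p (M n) (J n) / Dp p (J n)) \<longlongrightarrow> 1 / E) F"
    by (rule tendsto_divide[OF N D E0])
  have EV: "\<forall>\<^sub>F n in F. Np p (M n) (J n) / Dp p (J n) = gb p (M n) (J n)"
    using le
  proof eventually_elim
    case (elim n)
    have "exp (- (norm p / (1 - norm p)^2)) \<le> norm (Dp p (J n))" by (rule Dp_lower[OF r])
    then have "Dp p (J n) \<noteq> 0" by (metis exp_gt_zero norm_zero not_le)
    then show ?case using gb_closed[OF elim, of p] by (simp add: field_simps)
  qed
  show ?thesis using Lim_transform_eventually[OF T EV] unfolding E_def .
qed



lemma pow_sq_le: fixes q :: real assumes "0 \<le> q" "q \<le> 1" shows "q^(m*m) \<le> q^m"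
  by (rule power_decreasing) (use assms in \<open>auto simp: le_square\<close>)

lemma theta_nz:
  fixes Q x :: complex
  assumes Q: "Q \<noteq> 0" and x: "x \<noteq> 0" and Qx: "norm (Q*x) < 1" and Qdx: "norm (Q/x) < 1"
  shows "(\<Sum>m. Q^(m*m) * x^m) + (\<Sum>m. Q^((m+1)*(m+1)) * (1/x)^(m+1)) \<noteq> 0"
proof -
  have nQ2: "norm Q ^ 2 < 1"
  proof -
    have "norm Q ^ 2 = norm (Q*x) * norm (Q/x)" using x by (simp add: norm_mult norm_divide power2_eq_square)
    also have "\<dots> < 1 * 1" using Qx Qdx by (intro mult_strict_mono) auto
    finally show ?thesis by simp
  qed
  have nQ: "norm Q < 1"
  proof (rule ccontr)
    assume "\<not> norm Q < 1"
    then have "1 \<le> norm Q" by simp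
    then have "1 \<le> norm Q ^ 2" by (rule one_le_power)
    then show False using nQ2 by simp
  qed
  define p where "p = Q^2"
  have r: "norm p < 1" unfolding p_def using nQ2 by (simp add: norm_power)
  define E where "E = prodinf (\<lambda>l. 1 - p^(l+1))"
  have E0: "E \<noteq> 0" unfolding E_def by (rule Eprod(2)[OF r])
  define u where "u m = Q^(m*m) * x^m" for m
  define v where "v m = Q^((m+1)*(m+1)) * (1/x)^(m+1)" for m
  have nu: "norm (u m) \<le> norm (Q*x) ^ m" for m
  proof -
    have "norm (u m) = norm Q ^ (m*m) * norm x ^ m" by (simp add: u_def norm_mult norm_power)
    also have "\<dots> \<le> norm Q ^ m * norm x ^ m"
      using pow_sq_le[of "norm Q" m] nQ by (intro mult_right_mono) auto
    also have "\<dots> = norm (Q*x) ^ m" by (simp add: norm_mult power_mult_distrib)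
    finally show ?thesis .
  qed
  have nv: "norm (v m) \<le> norm (Q/x) ^ (m+1)" for m
  proof -
    have "norm (v m) = norm Q ^ ((m+1)*(m+1)) * norm (1/x) ^ (m+1)" by (simp only: v_def norm_mult norm_power)
    also have "\<dots> \<le> norm Q ^ (m+1) * norm (1/x) ^ (m+1)"
      using pow_sq_le[of "norm Q" "m+1"] nQ by (intro mult_right_mono) auto
    also have "\<dots> = norm (Q/x) ^ (m+1)" by (simp add: norm_divide power_divide)
    finally show ?thesis .
  qed
  have gu: "summable (\<lambda>m. norm (Q*x) ^ m)" by (rule summable_geometric) (use Qx in simp)
  have gv: "summable (\<lambda>m. norm (Q/x) ^ (m+1))"
    using summable_mult[OF summable_geometric[of "norm (Q/x)"], of "norm (Q/x)"] Qdx by simp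
  have snu: "summable (\<lambda>m. norm (u m))"
    by (rule summable_comparison_test'[OF gu, where N=0]) (use nu in simp)
  have snv: "summable (\<lambda>m. norm (v m))"
    by (rule summable_comparison_test'[OF gv, where N=0]) (use nv in simp)
  have su: "summable (\<lambda>m. Bd (norm p) * norm (u m))" by (rule summable_mult[OF snu])
  have sv: "summable (\<lambda>m. Bd (norm p) * norm (v m))" by (rule summable_mult[OF snv])
  define a where "a m N = gb p (2*N) (N+m) * u m" for m N
  define b where "b m N = (if m < N then gb p (2*N) (N - Suc m) else 0) * v m" for m N
  have alim: "(\<lambda>N. a m N) \<longlonglongrightarrow> (1/E) * u m" for m
  proof -
    have "(\<lambda>N. gb p (2*N) (N+m)) \<longlonglongrightarrow> 1/E"
      unfolding E_def
    proof (rule gb_lim[OF r])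
      show "filterlim (\<lambda>N. N + m) at_top sequentially" by (rule filterlim_add_const_nat_at_top)
      have "(\<lambda>N. 2*N - (N+m)) = (\<lambda>N. N - m)" by auto
      then show "filterlim (\<lambda>N. 2*N - (N+m)) at_top sequentially"
        using filterlim_minus_const_nat_at_top[of m] by simp
      show "\<forall>\<^sub>F N in sequentially. N + m \<le> 2*N"
        using eventually_ge_at_top[of m] by eventually_elim simp
    qed
    then show ?thesis unfolding a_def by (intro tendsto_intros)
  qed
  have blim: "(\<lambda>N. b m N) \<longlonglongrightarrow> (1/E) * v m" for m
  proof -
    have "(\<lambda>N. gb p (2*N) (N - Suc m)) \<longlonglongrightarrow> 1/E"
      unfolding E_def
    proof (rule gb_lim[OF r])
      show "filterlim (\<lambda>N. N - Suc m) at_top sequentially" by (rule filterlim_minus_const_nat_at_top)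
      show "filterlim (\<lambda>N. 2*N - (N - Suc m)) at_top sequentially"
        by (rule filterlim_at_top_mono[OF filterlim_ident]) (intro always_eventually allI, arith)
      show "\<forall>\<^sub>F N in sequentially. N - Suc m \<le> 2*N" by (intro always_eventually allI) arith
    qed
    then have "(\<lambda>N. gb p (2*N) (N - Suc m) * v m) \<longlonglongrightarrow> (1/E) * v m" by (intro tendsto_intros)
    moreover have "\<forall>\<^sub>F N in sequentially. gb p (2*N) (N - Suc m) * v m = b m N"
      using eventually_gt_at_top[of m] by eventually_elim (simp add: b_def)
    ultimately show ?thesis by (rule Lim_transform_eventually)
  qed
  have ta: "(\<lambda>N. suminf (\<lambda>m. a m N)) \<longlonglongrightarrow> suminf (\<lambda>m. (1/E) * u m)"
  proof -
    have "eventually (\<lambda>N. summable (\<lambda>m. norm (a m N))) sequentially \<and>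
           summable (\<lambda>m. norm ((1/E) * u m)) \<and>
           ((\<lambda>N. suminf (\<lambda>m. a m N)) \<longlonglongrightarrow> suminf (\<lambda>m. (1/E) * u m))"
    proof (rule tannerys_theorem[OF alim _ su])
      show "\<forall>\<^sub>F (m, N) in sequentially \<times>\<^sub>F sequentially. norm (a m N) \<le> Bd (norm p) * norm (u m)"
        by (intro always_eventually) (auto simp: a_def norm_mult intro!: mult_right_mono gb_bound[OF r])
    qed simp
    then show ?thesis by blast
  qed
  have tb: "(\<lambda>N. suminf (\<lambda>m. b m N)) \<longlonglongrightarrow> suminf (\<lambda>m. (1/E) * v m)"
  proof -
    have bd: "norm (b m N) \<le> Bd (norm p) * norm (v m)" for m N
    proof (cases "m < N")
      case True then show ?thesis by (auto simp: b_def norm_mult intro!: mult_right_mono gb_bound[OF r])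
    next
      case False
      have "0 \<le> Bd (norm p)" by (simp add: Bd_def)
      then show ?thesis using False by (simp add: b_def)
    qed
    have "eventually (\<lambda>N. summable (\<lambda>m. norm (b m N))) sequentially \<and>
           summable (\<lambda>m. norm ((1/E) * v m)) \<and>
           ((\<lambda>N. suminf (\<lambda>m. b m N)) \<longlonglongrightarrow> suminf (\<lambda>m. (1/E) * v m))"
    proof (rule tannerys_theorem[OF blim _ sv])
      show "\<forall>\<^sub>F (m, N) in sequentially \<times>\<^sub>F sequentially. norm (b m N) \<le> Bd (norm p) * norm (v m)"
        by (intro always_eventually) (auto simp: bd)
    qed simp
    then show ?thesis by blast
  qed
  have sa: "suminf (\<lambda>m. a m N) = (\<Sum>m\<le>N. gb p (2*N) (N+m) * Q^(m*m) * x^m)" for N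
  proof -
    have "suminf (\<lambda>m. a m N) = (\<Sum>m\<in>{..N}. a m N)"
      by (rule suminf_finite) (auto simp: a_def gb_zero)
    then show ?thesis by (simp add: a_def u_def mult.assoc)
  qed
  have sb: "suminf (\<lambda>m. b m N) = (\<Sum>m<N. gb p (2*N) (N - Suc m) * Q^((m+1)*(m+1)) * (1/x)^(m+1))" for N
  proof -
    have "suminf (\<lambda>m. b m N) = (\<Sum>m\<in>{..<N}. b m N)"
      by (rule suminf_finite) (auto simp: b_def)
    then show ?thesis by (simp add: b_def v_def mult.assoc)
  qed
  define h where "h i = (1 + x*Q^(2*i+1)) * (1 + Q^(2*i+1)/x)" for i
  have PN: "(\<Prod>i<N. h i) = suminf (\<lambda>m. a m N) + suminf (\<lambda>m. b m N)" for N
    unfolding sa sb h_def p_def by (rule finite_id[OF Q x])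
  have lim1: "(\<lambda>N. \<Prod>i<N. h i) \<longlonglongrightarrow> (1/E) * (suminf u + suminf v)"
  proof -
    have T: "(\<lambda>N. suminf (\<lambda>m. a m N) + suminf (\<lambda>m. b m N)) \<longlonglongrightarrow>
           suminf (\<lambda>m. (1/E) * u m) + suminf (\<lambda>m. (1/E) * v m)"
      by (rule tendsto_add[OF ta tb])
    have e1: "suminf (\<lambda>m. (1/E) * u m) = (1/E) * suminf u" by (rule suminf_mult[OF summable_norm_cancel[OF snu]])
    have e2: "suminf (\<lambda>m. (1/E) * v m) = (1/E) * suminf v" by (rule suminf_mult[OF summable_norm_cancel[OF snv]])
    show ?thesis using T unfolding PN[symmetric] e1 e2 distrib_left .
  qed
  have hbound: "norm (h i - 1) \<le> 3 * norm p ^ i" for i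
  proof -
    define A where "A = x*Q^(2*i+1)"
    define B where "B = Q^(2*i+1)/x"
    have A: "norm A \<le> norm p ^ i"
    proof -
      have "norm A = norm (Q*x) * norm p ^ i"
        unfolding A_def p_def by (simp add: norm_mult norm_power power_mult[symmetric] algebra_simps)
      also have "\<dots> \<le> 1 * norm p ^ i" using Qx by (intro mult_right_mono) auto
      finally show ?thesis by simp
    qed
    have B: "norm B \<le> norm p ^ i"
    proof -
      have "norm B = norm (Q/x) * norm p ^ i"
        unfolding B_def p_def by (simp add: norm_mult norm_divide norm_power power_mult[symmetric] algebra_simps)
      also have "\<dots> \<le> 1 * norm p ^ i" using Qdx by (intro mult_right_mono) auto
      finally show ?thesis by simp
    qed
    have pi1: "norm p ^ i \<le> 1" using r by (simp add: power_le_one)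
    have "h i - 1 = A + B + A * B" unfolding h_def A_def B_def by (simp add: algebra_simps)
    then have "norm (h i - 1) \<le> norm (A + B) + norm (A * B)" using norm_triangle_ineq[of "A+B" "A*B"] by simp
    also have "\<dots> \<le> norm A + norm B + norm A * norm B"
      using norm_triangle_ineq[of A B] by (simp add: norm_mult)
    also have "\<dots> \<le> norm p ^ i + norm p ^ i + norm p ^ i * 1"
      using A B pi1 by (intro add_mono mult_mono) auto
    finally show ?thesis by simp
  qed
  have hnz: "h i \<noteq> 0" for i
  proof -
    have nA: "norm (x*Q^(2*i+1)) < 1"
    proof -
      have "norm (x*Q^(2*i+1)) = norm (Q*x) * norm Q ^ (2*i)" by (simp add: norm_mult norm_power algebra_simps)
      also have "\<dots> \<le> norm (Q*x) * 1" using nQ by (intro mult_left_mono power_le_one) auto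
      finally show ?thesis using Qx by simp
    qed
    have nB: "norm (Q^(2*i+1)/x) < 1"
    proof -
      have "norm (Q^(2*i+1)/x) = norm (Q/x) * norm Q ^ (2*i)" by (simp add: norm_mult norm_divide norm_power algebra_simps)
      also have "\<dots> \<le> norm (Q/x) * 1" using nQ by (intro mult_left_mono power_le_one) auto
      finally show ?thesis using Qdx by simp
    qed
    have "1 + x*Q^(2*i+1) \<noteq> 0"
    proof
      assume z: "1 + x*Q^(2*i+1) = 0"
      have "x*Q^(2*i+1) = (1 + x*Q^(2*i+1)) - 1" by simp
      then have "x*Q^(2*i+1) = -1" unfolding z by simp
      then show False using nA by simp
    qed
    moreover have "1 + Q^(2*i+1)/x \<noteq> 0"
    proof
      assume z: "1 + Q^(2*i+1)/x = 0"
      have "Q^(2*i+1)/x = (1 + Q^(2*i+1)/x) - 1" by simp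
      then have "Q^(2*i+1)/x = -1" unfolding z by simp
      then show False using nB by simp
    qed
    ultimately show ?thesis unfolding h_def by simp
  qed
  have cph: "convergent_prod h"
  proof -
    have "summable (\<lambda>i. 3 * norm p ^ i)" using r by (intro summable_mult summable_geometric) simp
    then have "summable (\<lambda>i. norm (h i - 1))"
      by (rule summable_comparison_test[rotated]) (use hbound in auto)
    then show ?thesis by (intro abs_convergent_prod_imp_convergent_prod summable_imp_abs_convergent_prod)
  qed
  have lim2: "(\<lambda>N. \<Prod>i<N. h i) \<longlonglongrightarrow> prodinf h"
    using convergent_prod_LIMSEQ[OF cph] LIMSEQ_lessThan_iff_atMost[where f="prod h"] by simp
  have "(1/E) * (suminf u + suminf v) = prodinf h" by (rule LIMSEQ_unique[OF lim1 lim2])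
  moreover have "prodinf h \<noteq> 0" by (rule prodinf_nonzero[OF cph hnz])
  ultimately have "suminf u + suminf v \<noteq> 0" by auto
  then show ?thesis unfolding u_def v_def .
qed



lemma infsum_int_suminf:
  fixes f :: "int \<Rightarrow> complex"
  assumes s: "(\<lambda>n. norm (f n)) summable_on UNIV"
  shows "summable (\<lambda>m. f (int m))" "summable (\<lambda>m. f (- int (Suc m)))"
    and "infsum f UNIV = (\<Sum>m. f (int m)) + (\<Sum>m. f (- int (Suc m)))"
proof -
  have sf: "f summable_on UNIV" by (rule abs_summable_summable[OF s])
  have s1: "(\<lambda>m. f (int m)) summable_on UNIV"
  proof -
    have "f summable_on range int" by (rule summable_on_subset_banach[OF sf]) simp
    then show ?thesis by (subst (asm) summable_on_reindex) (auto simp: o_def inj_on_def)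
  qed
  have s2: "(\<lambda>m. f (- int (Suc m))) summable_on UNIV"
  proof -
    have "f summable_on range (\<lambda>m. - int (Suc m))" by (rule summable_on_subset_banach[OF sf]) simp
    then show ?thesis by (subst (asm) summable_on_reindex) (auto simp: o_def inj_on_def)
  qed
  have h1: "((\<lambda>m. f (int m)) has_sum infsum (\<lambda>m. f (int m)) UNIV) UNIV" using s1 by simp
  have h2: "((\<lambda>m. f (- int (Suc m))) has_sum infsum (\<lambda>m. f (- int (Suc m))) UNIV) UNIV" using s2 by simp
  have u1: "(\<lambda>m. f (int m)) sums infsum (\<lambda>m. f (int m)) UNIV" by (rule has_sum_imp_sums[OF h1])
  have u2: "(\<lambda>m. f (- int (Suc m))) sums infsum (\<lambda>m. f (- int (Suc m))) UNIV" by (rule has_sum_imp_sums[OF h2])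
  show "summable (\<lambda>m. f (int m))" using u1 by (simp add: sums_iff)
  show "summable (\<lambda>m. f (- int (Suc m)))" using u2 by (simp add: sums_iff)
  have "(f has_sum (infsum (\<lambda>m. f (int m)) UNIV + infsum (\<lambda>m. f (- int (Suc m))) UNIV)) UNIV"
    by (rule has_sum_int_split[OF h1 h2])
  then have "infsum f UNIV = infsum (\<lambda>m. f (int m)) UNIV + infsum (\<lambda>m. f (- int (Suc m))) UNIV"
    by (rule infsumI)
  also have "\<dots> = (\<Sum>m. f (int m)) + (\<Sum>m. f (- int (Suc m)))"
    using u1 u2 by (simp add: sums_iff)
  finally show "infsum f UNIV = (\<Sum>m. f (int m)) + (\<Sum>m. f (- int (Suc m)))" .
qed

lemma nonvan:
  assumes t: "Im t > 0" and r: "r = 1 \<or> r = 3"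
  shows "infsum (\<lambda>n. ph t (10*n+r) k) UNIV \<noteq> 0"
proof -
  define Q where "Q = exp (pi * \<i> * t)"
  define w where "w = pi * \<i> * t * of_int r / 5 + 2 * pi * \<i> * of_int k / 10"
  define x where "x = exp w"
  define K where "K = exp (pi * \<i> * t * of_int (r^2) / 100 + 2 * pi * \<i> * of_int (r*k) / 100)"
  have gen: "ph t (10*n+r) k = K * exp (of_int (n*n) * (pi * \<i> * t)) * exp (of_int n * w)" for n
    unfolding ph_def K_def w_def exp_add[symmetric]
    by (rule arg_cong[where f=exp]) (simp add: field_simps power2_eq_square)
  have pos: "ph t (10*int m+r) k = K * (Q^(m*m) * x^m)" for m
  proof -
    have "exp (of_int (int m * int m) * (pi * \<i> * t)) = Q^(m*m)"
      unfolding Q_def exp_of_nat_mult[symmetric] by simp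
    moreover have "exp (of_int (int m) * w) = x^m" unfolding x_def exp_of_nat_mult[symmetric] by simp
    ultimately show ?thesis using gen[of "int m"] by simp
  qed
  have neg: "ph t (10*(- int (Suc m))+r) k = K * (Q^((m+1)*(m+1)) * (1/x)^(m+1))" for m
  proof -
    have ee: "- int (Suc m) * - int (Suc m) = int ((m+1)*(m+1))" by (simp add: algebra_simps)
    have "exp (of_int (- int (Suc m) * - int (Suc m)) * (pi * \<i> * t)) = Q^((m+1)*(m+1))"
      unfolding Q_def exp_of_nat_mult[symmetric] ee of_int_of_nat_eq ..
    moreover have "exp (of_int (- int (Suc m)) * w) = (1/x)^(m+1)"
    proof -
      have "exp (of_int (- int (Suc m)) * w) = exp (of_nat (m+1) * (- w))" by (simp add: algebra_simps)
      also have "\<dots> = exp (- w) ^ (m+1)" by (rule exp_of_nat_mult)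
      also have "exp (- w) = 1/x" unfolding x_def by (simp add: exp_minus inverse_eq_divide)
      finally show ?thesis .
    qed
    ultimately show ?thesis using gen[of "- int (Suc m)"] by simp
  qed
  have K0: "K \<noteq> 0" unfolding K_def by simp
  have Q0: "Q \<noteq> 0" unfolding Q_def by simp
  have x0: "x \<noteq> 0" unfolding x_def by simp
  have r5: "0 < real_of_int r" "real_of_int r < 5" using r by auto
  have nQx: "norm (Q*x) < 1"
  proof -
    have "norm (Q*x) = exp (- (pi * Im t * (1 + real_of_int r / 5)))"
      unfolding Q_def x_def w_def by (simp add: norm_mult exp_add[symmetric] norm_exp_eq_Re field_simps)
    also have "\<dots> < 1" using t r5 by simp
    finally show ?thesis .
  qed
  have nQdx: "norm (Q/x) < 1"
  proof -
    have "norm (Q/x) = exp (- (pi * Im t * (1 - real_of_int r / 5)))"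
      unfolding Q_def x_def w_def by (simp add: norm_divide exp_diff[symmetric] norm_exp_eq_Re field_simps)
    also have "\<dots> < 1" using t r5 by (simp add: field_simps)
    finally show ?thesis .
  qed
  have rr: "0 \<le> r" "r \<le> 9" using r by auto
  note I = infsum_int_suminf[OF ph_abs_summable[OF t rr, of k]]
  have su: "summable (\<lambda>m. Q^(m*m) * x^m)"
  proof -
    have "summable (\<lambda>m. (1/K) * ph t (10*int m+r) k)" by (rule summable_mult[OF I(1)])
    then show ?thesis using K0 by (simp add: pos)
  qed
  have sv: "summable (\<lambda>m. Q^((m+1)*(m+1)) * (1/x)^(m+1))"
  proof -
    have "summable (\<lambda>m. (1/K) * ph t (10*(- int (Suc m))+r) k)" by (rule summable_mult[OF I(2)])
    then show ?thesis using K0 by (simp only: neg) simp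
  qed
  have "infsum (\<lambda>n. ph t (10*n+r) k) UNIV = K * ((\<Sum>m. Q^(m*m) * x^m) + (\<Sum>m. Q^((m+1)*(m+1)) * (1/x)^(m+1)))"
  proof -
    have "infsum (\<lambda>n. ph t (10*n+r) k) UNIV = (\<Sum>m. K * (Q^(m*m) * x^m)) + (\<Sum>m. K * (Q^((m+1)*(m+1)) * (1/x)^(m+1)))"
      unfolding I(3) pos neg ..
    also have "\<dots> = K * (\<Sum>m. Q^(m*m) * x^m) + K * (\<Sum>m. Q^((m+1)*(m+1)) * (1/x)^(m+1))"
      by (simp only: suminf_mult[OF su] suminf_mult[OF sv])
    also have "\<dots> = K * ((\<Sum>m. Q^(m*m) * x^m) + (\<Sum>m. Q^((m+1)*(m+1)) * (1/x)^(m+1)))"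
      by (rule distrib_left[symmetric])
    finally show ?thesis .
  qed
  moreover have "(\<Sum>m. Q^(m*m) * x^m) + (\<Sum>m. Q^((m+1)*(m+1)) * (1/x)^(m+1)) \<noteq> 0"
    by (rule theta_nz[OF Q0 x0 nQx nQdx])
  ultimately show ?thesis using K0 by simp
qed

lemma c_eq: "theta_const (1/5) (real k / 5) t = infsum (\<lambda>n. ph t (10*n+1) (int k)) UNIV"
  using theta_eq[of 1 "int k" t] by simp
lemma d_eq: "theta_const (3/5) (real k / 5) t = infsum (\<lambda>n. ph t (10*n+3) (int k)) UNIV"
  using theta_eq[of 3 "int k" t] by simp
lemma t1_eq: "theta_const 1 (1/5) t = infsum (\<lambda>n. ph t (10*n+5) 1) UNIV"
  using theta_eq[of 5 1 t] by simp
lemma t3_eq: "theta_const 1 (3/5) t = infsum (\<lambda>n. ph t (10*n+5) 3) UNIV"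
  using theta_eq[of 5 3 t] by simp

lemma zeta5_pow: "zeta5 ^ n = exp (2 * pi * \<i> * (of_int (20 * int n) / 100))"
  unfolding zeta5_def exp_of_nat_mult[symmetric] by (rule arg_cong[where f=exp]) simp
lemma z0: "exp (2 * pi * \<i> * (of_int 0 / 100)) = 1" by simp
lemma z40: "exp (2 * pi * \<i> * (of_int 40 / 100)) = zeta5^2" using zeta5_pow[of 2] by simp
lemma z60: "exp (2 * pi * \<i> * (of_int 60 / 100)) = zeta5^3" using zeta5_pow[of 3] by simp
lemma z10: "exp (2 * pi * \<i> * (of_int 10 / 100)) = - (zeta5^3)"
proof -
  have "exp (2 * pi * \<i> * (of_int 60 / 100)) = exp (2 * pi * \<i> * (of_int 10 / 100)) * exp (of_real pi * \<i>)"
    unfolding exp_add[symmetric] by (rule arg_cong[where f=exp]) (simp add: field_simps)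
  then have h: "exp (2 * pi * \<i> * (of_int 10 / 100)) = - exp (2 * pi * \<i> * (of_int 60 / 100))" by simp
  show ?thesis unfolding h z60 ..
qed
lemma z5: "zeta5 ^ 5 = 1"
  using zeta5_pow[of 5] by simp

theorem theorem5p4:
  fixes t :: complex
  assumes "Im t > 0"
  defines "c \<equiv> (\<lambda>k::nat. theta_const (1/5) (real k / 5) t)"
      and "d \<equiv> (\<lambda>k::nat. theta_const (3/5) (real k / 5) t)"
  shows "theta_const 1 (1/5) t =
           - (zeta5^2) * ((d 1)^3 * c 5 + zeta5^3 * (d 7)^3 * c 1) / (c 3)^3 \<and>
         theta_const 1 (3/5) t =
           - (zeta5^3) * ((c 7)^3 * d 5 - (c 9)^3 * d 3) / (d 9)^3"
proof -
  have cc: "c k = infsum (\<lambda>n. ph t (10*n+1) (int k)) UNIV" for k unfolding c_def by (rule c_eq)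
  have dd: "d k = infsum (\<lambda>n. ph t (10*n+3) (int k)) UNIV" for k unfolding d_def by (rule d_eq)
  have c3: "c 3 \<noteq> 0" unfolding cc using nonvan[OF assms(1), of 1 "int 3"] by simp
  have d9: "d 9 \<noteq> 0" unfolding dd using nonvan[OF assms(1), of 3 "int 9"] by simp
  have A1: "infsum (TT t 1 5 3 1 0) UNIV = c 3 ^ 3 * theta_const 1 (1/5) t"
    using TT_sum(2)[OF assms(1), of 1 5 3 1 0] by (simp add: cc t1_eq)
  have A2: "infsum (TT t 3 1 1 5 40) UNIV = zeta5^2 * (d 1 ^ 3 * c 5)"
    using TT_sum(2)[OF assms(1), of 3 1 1 5 40, unfolded z40] by (simp add: cc dd)
  have A3: "infsum (TT t 3 1 7 1 0) UNIV = d 7 ^ 3 * c 1"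
    using TT_sum(2)[OF assms(1), of 3 1 7 1 0] by (simp add: cc dd)
  have B1: "infsum (TT t 3 5 9 3 0) UNIV = d 9 ^ 3 * theta_const 1 (3/5) t"
    using TT_sum(2)[OF assms(1), of 3 5 9 3 0] by (simp add: dd t3_eq)
  have B2: "infsum (TT t 1 3 7 5 60) UNIV = zeta5^3 * (c 7 ^ 3 * d 5)"
    using TT_sum(2)[OF assms(1), of 1 3 7 5 60, unfolded z60] by (simp add: cc dd)
  have B3: "infsum (TT t 1 3 9 3 10) UNIV = - (zeta5^3) * (c 9 ^ 3 * d 3)"
    using TT_sum(2)[OF assms(1), of 1 3 9 3 10, unfolded z10] by (simp add: cc dd)
  have I1: "c 3 ^ 3 * theta_const 1 (1/5) t + zeta5^2 * (d 1 ^ 3 * c 5) + d 7 ^ 3 * c 1 = 0"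
    using ident1[OF assms(1)] unfolding A1 A2 A3 .
  have I2: "d 9 ^ 3 * theta_const 1 (3/5) t + zeta5^3 * (c 7 ^ 3 * d 5) + - (zeta5^3) * (c 9 ^ 3 * d 3) = 0"
    using ident2[OF assms(1)] unfolding B1 B2 B3 .
  have "zeta5^5 = 1" by (rule z5)
  then have z23: "zeta5^2 * zeta5^3 = 1" by (simp add: power_add[symmetric])
  have L1: "c 3 ^ 3 * theta_const 1 (1/5) t = - (zeta5^2) * ((d 1)^3 * c 5 + zeta5^3 * (d 7)^3 * c 1)"
  proof -
    have "c 3 ^ 3 * theta_const 1 (1/5) t = (c 3 ^ 3 * theta_const 1 (1/5) t + zeta5^2 * (d 1 ^ 3 * c 5) + d 7 ^ 3 * c 1)
            - (zeta5^2) * (d 1 ^ 3 * c 5) - d 7 ^ 3 * c 1" by simp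
    also have "\<dots> = - (zeta5^2) * (d 1 ^ 3 * c 5) - (zeta5^2 * zeta5^3) * (d 7 ^ 3 * c 1)" unfolding I1 z23 by simp
    also have "\<dots> = - (zeta5^2) * ((d 1)^3 * c 5 + zeta5^3 * (d 7)^3 * c 1)" by (simp add: algebra_simps)
    finally show ?thesis .
  qed
  have L2: "d 9 ^ 3 * theta_const 1 (3/5) t = - (zeta5^3) * ((c 7)^3 * d 5 - (c 9)^3 * d 3)"
  proof -
    have "d 9 ^ 3 * theta_const 1 (3/5) t = (d 9 ^ 3 * theta_const 1 (3/5) t + zeta5^3 * (c 7 ^ 3 * d 5) + - (zeta5^3) * (c 9 ^ 3 * d 3))
            - (zeta5^3) * (c 7 ^ 3 * d 5) - (- (zeta5^3) * (c 9 ^ 3 * d 3))" by simp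
    also have "\<dots> = - (zeta5^3) * (c 7 ^ 3 * d 5) + zeta5^3 * (c 9 ^ 3 * d 3)" unfolding I2 by simp
    also have "\<dots> = - (zeta5^3) * ((c 7)^3 * d 5 - (c 9)^3 * d 3)" by (simp add: algebra_simps)
    finally show ?thesis .
  qed
  have "theta_const 1 (1/5) t = (c 3 ^ 3 * theta_const 1 (1/5) t) / c 3 ^ 3" using c3 by simp
  moreover have "theta_const 1 (3/5) t = (d 9 ^ 3 * theta_const 1 (3/5) t) / d 9 ^ 3" using d9 by simp
  ultimately show ?thesis unfolding L1 L2 by simp
qed

end
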